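(* Assume $\max\{\mathrm{cov}(\mathcal{M}),\mathrm{cov}(\mathcal{N})\}=\mathfrak{c}$. Then there is a set $\mathcal{S}$ of Turing degrees with $|\mathcal{S}|=\mathfrak{c}$ that is an antichain under $\le_T$ and such that $\mathbb{R}_{\mathcal{S}}$ has the following property: for every collection of $\mathfrak{c}$ many pairwise disjoint pairs $(x,y)$ of elements of $\mathbb{R}_{\mathcal{S}}$ such that in each pair $x$ and $y$ have different Turing degrees, there are pairs $(x_1,y_1),(x_2,y_2)$ in the collection with $x_1<x_2$ and $y_1<y_2$, and pairs $(w_1,z_1),(w_2,z_2)$ in the collection with $w_1<w_2$ but $z_1>z_2$.
   Context: $\mathfrak{c}=2^{\aleph_0}$; $\mathrm{cov}(\mathcal{M})$ (resp. $\mathrm{cov}(\mathcal{N})$) is the least number of meager (resp. Lebesgue null) sets needed to cover $\mathbb{R}$. $\mathbb{R}_{\mathcal{S}}$ is the set of reals whose Turing degree lies in $\mathcal{S}$. A collection of pairs $\{(x_\alpha,y_\alpha)\}$ is pairwise disjoint if $x_\alpha\ne y_\alpha$ and $\{x_\alpha,y_\alpha\}\cap\{x_\beta,y_\beta\}=\emptyset$ for $\alpha\ne\beta$. *)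

theory Defs
  imports "HOL-Analysis.Analysis" "HOL-Probability.Probability"
    "HOL-Library.Equipollence" "HOL-Library.Nat_Bijection"
begin

definition nowhere_dense :: "real set \<Rightarrow> bool" where
  "nowhere_dense A \<longleftrightarrow> interior (closure A) = {}"

definition meager :: "real set \<Rightarrow> bool" where
  "meager A \<longleftrightarrow> (\<exists>F. countable F \<and> (\<forall>B\<in>F. nowhere_dense B) \<and> A \<subseteq> \<Union>F)"

definition lebesgue_null :: "real set \<Rightarrow> bool" where
  "lebesgue_null A \<longleftrightarrow> A \<in> null_sets lebesgue"

definition cov_eq_continuum :: "(real set \<Rightarrow> bool) \<Rightarrow> bool" where
  "cov_eq_continuum I \<longleftrightarrow>
     (\<forall>F. F \<prec> (UNIV :: real set) \<and> (\<forall>A\<in>F. I A) \<longrightarrow> \<Union>F \<noteq> UNIV)"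

text \<open>Primitive recursion scheme on argument lists: f (0#xs) = g xs,
  f (Suc y # xs) = h (y # f (y#xs) # xs).\<close>
fun prim_rec_op :: "(nat list \<Rightarrow> nat) \<Rightarrow> (nat list \<Rightarrow> nat) \<Rightarrow> nat list \<Rightarrow> nat" where
  "prim_rec_op g h [] = 0"
| "prim_rec_op g h (y # xs) = rec_nat (g xs) (\<lambda>k r. h (k # r # xs)) y"

text \<open>rec_in orc n f: f is an n-ary total function recursive in the oracle orc
  (Kleene's mu-recursive functions with minimisation restricted to regular functions,
  relativised to orc).  Only the values of f on lists of length n are meaningful.\<close>
inductive rec_in :: "(nat \<Rightarrow> nat) \<Rightarrow> nat \<Rightarrow> (nat list \<Rightarrow> nat) \<Rightarrow> bool" for orc where
  zero: "rec_in orc n (\<lambda>_. 0)"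
| succ: "rec_in orc 1 (\<lambda>xs. Suc (hd xs))"
| proj: "i < n \<Longrightarrow> rec_in orc n (\<lambda>xs. xs ! i)"
| oracle_call: "rec_in orc 1 (\<lambda>xs. orc (hd xs))"
| comp: "rec_in orc m g \<Longrightarrow> length fs = m \<Longrightarrow> (\<forall>i<m. rec_in orc n (fs ! i)) \<Longrightarrow>
         rec_in orc n (\<lambda>xs. g (map (\<lambda>f. f xs) fs))"
| prim_rec: "rec_in orc n g \<Longrightarrow> rec_in orc (Suc (Suc n)) h \<Longrightarrow>
         rec_in orc (Suc n) (prim_rec_op g h)"
| minimize: "rec_in orc (Suc n) f \<Longrightarrow> (\<forall>xs. length xs = n \<longrightarrow> (\<exists>y. f (y # xs) = 0)) \<Longrightarrow>
         rec_in orc n (\<lambda>xs. LEAST y. f (y # xs) = 0)"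

definition turing_reducible_fun :: "(nat \<Rightarrow> nat) \<Rightarrow> (nat \<Rightarrow> nat) \<Rightarrow> bool" where
  "turing_reducible_fun A B \<longleftrightarrow> (\<exists>f. rec_in B 1 f \<and> (\<forall>n. f [n] = A n))"

text \<open>A real x is identified (up to Turing equivalence) with the sequence of its dyadic
  approximations n \<mapsto> floor(x * 2^n), coded into nat by the standard bijection int_encode.\<close>
definition real_oracle :: "real \<Rightarrow> nat \<Rightarrow> nat" where
  "real_oracle x n = int_encode \<lfloor>x * 2 ^ n\<rfloor>"

definition turing_le :: "real \<Rightarrow> real \<Rightarrow> bool" (infix \<open>\<le>\<^sub>T\<close> 50) where
  "x \<le>\<^sub>T y \<longleftrightarrow> turing_reducible_fun (real_oracle x) (real_oracle y)"

definition turing_equiv :: "real \<Rightarrow> real \<Rightarrow> bool" (infix \<open>\<equiv>\<^sub>T\<close> 50) where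
  "x \<equiv>\<^sub>T y \<longleftrightarrow> x \<le>\<^sub>T y \<and> y \<le>\<^sub>T x"

definition tdeg :: "real \<Rightarrow> real set" where
  "tdeg x = {y. y \<equiv>\<^sub>T x}"

definition is_turing_degree :: "real set \<Rightarrow> bool" where
  "is_turing_degree D \<longleftrightarrow> (\<exists>x. D = tdeg x)"

definition degree_le :: "real set \<Rightarrow> real set \<Rightarrow> bool" where
  "degree_le D E \<longleftrightarrow> (\<exists>x\<in>D. \<exists>y\<in>E. x \<le>\<^sub>T y)"

definition degree_antichain :: "real set set \<Rightarrow> bool" where
  "degree_antichain S \<longleftrightarrow> (\<forall>D\<in>S. \<forall>E\<in>S. D \<noteq> E \<longrightarrow> \<not> degree_le D E)"

definition reals_of_degrees :: "real set set \<Rightarrow> real set" where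
  "reals_of_degrees S = {x. tdeg x \<in> S}"

definition pairwise_disjoint_pairs :: "(real \<times> real) set \<Rightarrow> bool" where
  "pairwise_disjoint_pairs C \<longleftrightarrow>
     (\<forall>(x,y)\<in>C. x \<noteq> y) \<and>
     (\<forall>p\<in>C. \<forall>q\<in>C. p \<noteq> q \<longrightarrow> {fst p, snd p} \<inter> {fst q, snd q} = {})"

end

theory Submission
  imports Defs "HOL-Library.Countable" "HOL-Library.Sublist" "HOL-Library.Countable_Set" "HOL-Library.Equipollence"
begin
unbundle cardinal_syntax

datatype prog = PZ | PS | PP nat | PO | PC prog "prog list" | PR prog prog | PM prog

instance prog :: countable by countable_datatype

inductive ev :: "(nat \<Rightarrow> nat) \<Rightarrow> prog \<Rightarrow> nat list \<Rightarrow> nat \<Rightarrow> bool" for orc where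
  evZ: "ev orc PZ xs 0"
| evS: "ev orc PS xs (Suc (hd xs))"
| evP: "ev orc (PP i) xs (xs ! i)"
| evO: "ev orc PO xs (orc (hd xs))"
| evC: "length vs = length ps \<Longrightarrow> (\<forall>i<length ps. ev orc (ps ! i) xs (vs ! i)) \<Longrightarrow> ev orc g vs v
        \<Longrightarrow> ev orc (PC g ps) xs v"
| evR0: "ev orc g xs v \<Longrightarrow> ev orc (PR g h) (0 # xs) v"
| evRS: "ev orc (PR g h) (y # xs) r \<Longrightarrow> ev orc h (y # r # xs) v \<Longrightarrow> ev orc (PR g h) (Suc y # xs) v"
| evM: "ev orc f (y # xs) 0 \<Longrightarrow> (\<forall>z<y. \<exists>v. v \<noteq> 0 \<and> ev orc f (z # xs) v) \<Longrightarrow> ev orc (PM f) xs y"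

lemma ev_det: "ev orc p xs v \<Longrightarrow> ev orc p xs w \<Longrightarrow> v = w"
proof (induction arbitrary: w rule: ev.induct)
  case (evC vs ps xs g v)
  from evC.prems obtain vs' where l: "length vs' = length ps" and a: "\<forall>i<length ps. ev orc (ps ! i) xs (vs' ! i)"
    and b: "ev orc g vs' w" by (cases rule: ev.cases) auto
  have "vs' = vs" using l a evC.IH(1) evC.hyps(1) by (intro nth_equalityI) auto
  then show ?case using evC.IH(2) b by simp
next
  case (evR0 g xs v h)
  from evR0.prems show ?case by (cases rule: ev.cases) (auto intro: evR0.IH)
next
  case (evRS g h y xs r v)
  from evRS.prems obtain r' where "ev orc (PR g h) (y # xs) r'" "ev orc h (y # r' # xs) w"
    by (cases rule: ev.cases) auto
  then show ?case using evRS.IH by metis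
next
  case (evM f y xs)
  from evM.prems obtain y' where a: "ev orc f (y' # xs) 0" and b: "\<forall>z<y'. \<exists>v. v \<noteq> 0 \<and> ev orc f (z # xs) v" and "w = y'"
    by (cases rule: ev.cases) auto
  show ?case
  proof (rule ccontr)
    assume "y \<noteq> w"
    then consider "y < y'" | "y' < y" using \<open>w = y'\<close> by linarith
    then show False
    proof cases
      case 1 then obtain v where "v \<noteq> 0" "ev orc f (y # xs) v" using b by blast
      then show False using evM.IH(1) by fastforce
    next
      case 2 then obtain v where "v \<noteq> 0" "ev orc f (y' # xs) v" "\<forall>w. ev orc f (y' # xs) w \<longrightarrow> v = w" using evM.IH(2) by blast
      then show False using a by fastforce
    qed
  qed
qed (auto elim: ev.cases)



lemma rec_in_prog: "rec_in orc n f \<Longrightarrow> \<exists>p. \<forall>xs. length xs = n \<longrightarrow> ev orc p xs (f xs)"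
proof (induction rule: rec_in.induct)
  case (zero n) then show ?case by (auto intro: evZ)
next
  case succ then show ?case by (auto intro: evS)
next
  case (proj i n) then show ?case by (auto intro: evP)
next
  case oracle_call then show ?case by (auto intro: evO)
next
  case (comp m g fs n)
  from comp.IH obtain pg where pg: "\<forall>xs. length xs = m \<longrightarrow> ev orc pg xs (g xs)" by blast
  from comp.IH(2) have "\<forall>i. \<exists>p. i < m \<longrightarrow> (\<forall>xs. length xs = n \<longrightarrow> ev orc p xs ((fs ! i) xs))" by blast
  from choice[OF this] obtain pf where pf: "\<And>i. i < m \<Longrightarrow> \<forall>xs. length xs = n \<longrightarrow> ev orc (pf i) xs ((fs ! i) xs)" by blast
  show ?case
  proof (intro exI allI impI)
    fix xs :: "nat list" assume l: "length xs = n"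
    show "ev orc (PC pg (map pf [0..<m])) xs (g (map (\<lambda>f. f xs) fs))"
      by (rule evC[where vs="map (\<lambda>f. f xs) fs"]) (use comp.hyps(2) pf l pg in auto)
  qed
next
  case (prim_rec n g h)
  from prim_rec.IH obtain pg ph where pg: "\<forall>xs. length xs = n \<longrightarrow> ev orc pg xs (g xs)"
    and ph: "\<forall>xs. length xs = Suc (Suc n) \<longrightarrow> ev orc ph xs (h xs)" by blast
  have "ev orc (PR pg ph) (y # xs) (prim_rec_op g h (y # xs))" if "length xs = n" for y xs
  proof (induction y)
    case 0 then show ?case using pg that by (auto intro: evR0)
  next
    case (Suc y) then show ?case using ph that by (auto intro: evRS)
  qed
  then have "\<forall>xs. length xs = Suc n \<longrightarrow> ev orc (PR pg ph) xs (prim_rec_op g h xs)"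
    by (auto simp: length_Suc_conv)
  then show ?case by blast
next
  case (minimize n f)
  from minimize.IH obtain pf where pf: "\<forall>xs. length xs = Suc n \<longrightarrow> ev orc pf xs (f xs)" by blast
  show ?case
  proof (intro exI allI impI)
    fix xs :: "nat list" assume l: "length xs = n"
    then obtain y where y: "f (y # xs) = 0" using minimize.hyps(2) by blast
    show "ev orc (PM pf) xs (LEAST y. f (y # xs) = 0)"
    proof (rule evM)
      have "f ((LEAST y. f (y # xs) = 0) # xs) = 0" using LeastI[of "\<lambda>y. f (y # xs) = 0", OF y] .
      moreover have "ev orc pf ((LEAST y. f (y # xs) = 0) # xs) (f ((LEAST y. f (y # xs) = 0) # xs))"
        using pf l by simp
      ultimately show "ev orc pf ((LEAST y. f (y # xs) = 0) # xs) 0" by simp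
      show "\<forall>z<(LEAST y. f (y # xs) = 0). \<exists>v. v \<noteq> 0 \<and> ev orc pf (z # xs) v"
      proof (intro allI impI)
        fix z assume z: "z < (LEAST y. f (y # xs) = 0)"
        have "f (z # xs) \<noteq> 0" using not_less_Least[OF z] .
        moreover have "ev orc pf (z # xs) (f (z # xs))" using pf l by simp
        ultimately show "\<exists>v. v \<noteq> 0 \<and> ev orc pf (z # xs) v" by blast
      qed
    qed
  qed
qed



lemma finite_mono_combine:
  fixes k :: nat and Q :: "nat \<Rightarrow> nat \<Rightarrow> bool"
  assumes "\<forall>i<k. \<exists>N. Q i N" "\<And>i N N'. Q i N \<Longrightarrow> N \<le> N' \<Longrightarrow> Q i N'"
  shows "\<exists>N. \<forall>i<k. Q i N"
  using assms(1)
proof (induction k)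
  case 0 then show ?case by simp
next
  case (Suc k)
  then obtain N where N: "\<forall>i<k. Q i N" by auto
  from Suc.prems obtain M where M: "Q k M" by auto
  have "\<forall>i<Suc k. Q i (max N M)"
  proof (intro allI impI)
    fix i assume "i < Suc k"
    then consider "i < k" | "i = k" by linarith
    then show "Q i (max N M)"
    proof cases
      case 1 then show ?thesis using N assms(2) by (meson max.cobounded1)
    next
      case 2 then show ?thesis using M assms(2) by (meson max.cobounded2)
    qed
  qed
  then show ?case by blast
qed

definition uses :: "(nat \<Rightarrow> nat) \<Rightarrow> prog \<Rightarrow> nat list \<Rightarrow> nat \<Rightarrow> nat \<Rightarrow> bool" where
  "uses orc p xs v N \<longleftrightarrow> (\<forall>orc'. (\<forall>u<N. orc' u = orc u) \<longrightarrow> ev orc' p xs v)"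

lemma uses_mono: "uses orc p xs v N \<Longrightarrow> N \<le> N' \<Longrightarrow> uses orc p xs v N'"
  unfolding uses_def by (meson less_le_trans)

lemma ev_use: "ev orc p xs v \<Longrightarrow> \<exists>N. uses orc p xs v N"
proof (induction rule: ev.induct)
  case (evZ xs) then show ?case unfolding uses_def by (auto intro: ev.evZ)
next
  case (evS xs) then show ?case unfolding uses_def by (auto intro: ev.evS)
next
  case (evP i xs) then show ?case unfolding uses_def by (auto intro: ev.evP)
next
  case (evO xs)
  have "ev orc' PO xs (orc (hd xs))" if "orc' (hd xs) = orc (hd xs)" for orc'
    using ev.evO[of orc' xs] that by simp
  then have "uses orc PO xs (orc (hd xs)) (Suc (hd xs))" unfolding uses_def by simp
  then show ?case by blast
next
  case (evC vs ps xs g v)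
  have "\<forall>i<length ps. \<exists>N. uses orc (ps ! i) xs (vs ! i) N" using evC.IH(1) by blast
  moreover have "\<And>i N N'. uses orc (ps ! i) xs (vs ! i) N \<Longrightarrow> N \<le> N' \<Longrightarrow> uses orc (ps ! i) xs (vs ! i) N'"
    by (rule uses_mono)
  ultimately have "\<exists>N. \<forall>i<length ps. uses orc (ps ! i) xs (vs ! i) N" by (rule finite_mono_combine)
  then obtain N where N: "\<forall>i<length ps. uses orc (ps ! i) xs (vs ! i) N" by blast
  from evC.IH(2) obtain M where M: "uses orc g vs v M" by blast
  have "uses orc (PC g ps) xs v (max N M)"
    unfolding uses_def
  proof (intro allI impI)
    fix orc' assume a: "\<forall>u<max N M. orc' u = orc u"
    show "ev orc' (PC g ps) xs v"
    proof (rule ev.evC[OF evC.hyps(1)])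
      show "\<forall>i<length ps. ev orc' (ps ! i) xs (vs ! i)"
      proof (intro allI impI)
        fix i assume i: "i < length ps"
        have "\<forall>u<N. orc' u = orc u" using a by simp
        then show "ev orc' (ps ! i) xs (vs ! i)" using N i unfolding uses_def by blast
      qed
      have "\<forall>u<M. orc' u = orc u" using a by simp
      then show "ev orc' g vs v" using M unfolding uses_def by blast
    qed
  qed
  then show ?case by blast
next
  case (evR0 g xs v h)
  then obtain N where N: "uses orc g xs v N" by blast
  have "uses orc (PR g h) (0 # xs) v N" using N unfolding uses_def by (blast intro: ev.evR0)
  then show ?case by blast
next
  case (evRS g h y xs r v)
  then obtain N M where N: "uses orc (PR g h) (y # xs) r N" and M: "uses orc h (y # r # xs) v M" by blast
  have "uses orc (PR g h) (Suc y # xs) v (max N M)"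
    unfolding uses_def
  proof (intro allI impI)
    fix orc' assume a: "\<forall>u<max N M. orc' u = orc u"
    then have "\<forall>u<N. orc' u = orc u" "\<forall>u<M. orc' u = orc u" by simp_all
    then have "ev orc' (PR g h) (y # xs) r" "ev orc' h (y # r # xs) v" using N M unfolding uses_def by blast+
    then show "ev orc' (PR g h) (Suc y # xs) v" by (rule ev.evRS)
  qed
  then show ?case by blast
next
  case (evM f y xs)
  have "\<forall>z<y. \<exists>N. \<exists>v. v \<noteq> 0 \<and> uses orc f (z # xs) v N"
  proof (intro allI impI)
    fix z assume "z < y"
    then obtain v where "v \<noteq> 0" "\<exists>N. uses orc f (z # xs) v N" using evM.IH(2) by blast
    then show "\<exists>N. \<exists>v. v \<noteq> 0 \<and> uses orc f (z # xs) v N" by blast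
  qed
  moreover have "\<And>z N N'. \<exists>v. v \<noteq> 0 \<and> uses orc f (z # xs) v N \<Longrightarrow> N \<le> N' \<Longrightarrow> \<exists>v. v \<noteq> 0 \<and> uses orc f (z # xs) v N'"
    using uses_mono by blast
  ultimately have "\<exists>N. \<forall>z<y. \<exists>v. v \<noteq> 0 \<and> uses orc f (z # xs) v N" by (rule finite_mono_combine)
  then obtain N where N: "\<forall>z<y. \<exists>v. v \<noteq> 0 \<and> uses orc f (z # xs) v N" by blast
  from evM.IH(1) obtain M where M: "uses orc f (y # xs) 0 M" by blast
  have "uses orc (PM f) xs y (max N M)"
    unfolding uses_def
  proof (intro allI impI)
    fix orc' assume a: "\<forall>u<max N M. orc' u = orc u"
    then have aN: "\<forall>u<N. orc' u = orc u" and aM: "\<forall>u<M. orc' u = orc u" by simp_all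
    show "ev orc' (PM f) xs y"
    proof (rule ev.evM)
      show "ev orc' f (y # xs) 0" using M aM unfolding uses_def by blast
      show "\<forall>z<y. \<exists>v. v \<noteq> 0 \<and> ev orc' f (z # xs) v"
      proof (intro allI impI)
        fix z assume "z < y"
        then obtain v where "v \<noteq> 0" "uses orc f (z # xs) v N" using N by blast
        then show "\<exists>v. v \<noteq> 0 \<and> ev orc' f (z # xs) v" using aN unfolding uses_def by blast
      qed
    qed
  qed
  then show ?case by blast
qed


lemma rec_in_subst:
  assumes "rec_in B n f" "\<And>m. h [m] = B m" "rec_in C 1 h"
  shows "\<exists>f'. rec_in C n f' \<and> (\<forall>xs. length xs = n \<longrightarrow> f' xs = f xs)"
  using assms(1)
proof (induction rule: rec_in.induct)
  case (zero n) show ?case using rec_in.zero[of C n] by blast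
next
  case succ show ?case using rec_in.succ[of C] by blast
next
  case (proj i n) show ?case using rec_in.proj[of i n C] proj by blast
next
  case oracle_call
  have "rec_in C 1 (\<lambda>xs. h (map (\<lambda>f. f xs) [\<lambda>xs. xs ! 0]))"
    by (rule rec_in.comp[OF assms(3)]) (auto intro: rec_in.proj)
  moreover have "\<forall>xs. length xs = 1 \<longrightarrow> h (map (\<lambda>f. f xs) [\<lambda>xs. xs ! 0]) = B (hd xs)"
    using assms(2) by (auto simp: length_Suc_conv)
  ultimately show ?case by blast
next
  case (comp m g fs n)
  from comp.IH obtain g' where g': "rec_in C m g'" "\<forall>xs. length xs = m \<longrightarrow> g' xs = g xs" by blast
  from comp.IH(2) have "\<forall>i. \<exists>f'. i < m \<longrightarrow> rec_in C n f' \<and> (\<forall>xs. length xs = n \<longrightarrow> f' xs = (fs ! i) xs)" by blast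
  from choice[OF this] obtain ff where ff: "\<And>i. i < m \<Longrightarrow> rec_in C n (ff i) \<and> (\<forall>xs. length xs = n \<longrightarrow> ff i xs = (fs ! i) xs)" by blast
  let ?fs = "map ff [0..<m]"
  have "rec_in C n (\<lambda>xs. g' (map (\<lambda>f. f xs) ?fs))"
    by (rule rec_in.comp[OF g'(1)]) (use ff in auto)
  moreover have "\<forall>xs. length xs = n \<longrightarrow> g' (map (\<lambda>f. f xs) ?fs) = g (map (\<lambda>f. f xs) fs)"
  proof (intro allI impI)
    fix xs :: "nat list" assume l: "length xs = n"
    have "map (\<lambda>f. f xs) ?fs = map (\<lambda>f. f xs) fs"
      by (rule nth_equalityI) (use comp.hyps(2) ff l in auto)
    then show "g' (map (\<lambda>f. f xs) ?fs) = g (map (\<lambda>f. f xs) fs)" using g'(2) comp.hyps(2) by simp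
  qed
  ultimately show ?case by blast
next
  case (prim_rec n g h)
  from prim_rec.IH obtain g' h' where g': "rec_in C n g'" "\<forall>xs. length xs = n \<longrightarrow> g' xs = g xs"
    and h': "rec_in C (Suc (Suc n)) h'" "\<forall>xs. length xs = Suc (Suc n) \<longrightarrow> h' xs = h xs" by blast
  have "prim_rec_op g' h' (y # xs) = prim_rec_op g h (y # xs)" if "length xs = n" for y xs
    by (induction y) (use g' h' that in auto)
  then have "\<forall>xs. length xs = Suc n \<longrightarrow> prim_rec_op g' h' xs = prim_rec_op g h xs"
    by (metis Suc_length_conv)
  then show ?case using rec_in.prim_rec[OF g'(1) h'(1)] by blast
next
  case (minimize n f)
  from minimize.IH obtain f' where f': "rec_in C (Suc n) f'" "\<forall>xs. length xs = Suc n \<longrightarrow> f' xs = f xs" by blast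
  have "\<forall>xs. length xs = n \<longrightarrow> (\<exists>y. f' (y # xs) = 0)" using minimize.hyps(2) f'(2) by auto
  from rec_in.minimize[OF f'(1) this] have "rec_in C n (\<lambda>xs. LEAST y. f' (y # xs) = 0)" .
  moreover have "\<forall>xs. length xs = n \<longrightarrow> (LEAST y. f' (y # xs) = 0) = (LEAST y. f (y # xs) = 0)"
    using f'(2) by auto
  ultimately show ?case by blast
qed



lemma turing_le_refl: "x \<le>\<^sub>T x"
  unfolding turing_le_def turing_reducible_fun_def
  using rec_in.oracle_call[of "real_oracle x"] by (intro exI[of _ "\<lambda>xs. real_oracle x (hd xs)"]) simp

lemma turing_le_trans: "x \<le>\<^sub>T y \<Longrightarrow> y \<le>\<^sub>T z \<Longrightarrow> x \<le>\<^sub>T z"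
  unfolding turing_le_def turing_reducible_fun_def
proof (elim exE conjE)
  fix f h assume f: "rec_in (real_oracle y) 1 f" "\<forall>n. f [n] = real_oracle x n"
    and h: "rec_in (real_oracle z) 1 h" "\<forall>n. h [n] = real_oracle y n"
  have hh: "\<And>m. h [m] = real_oracle y m" using h(2) by simp
  from rec_in_subst[OF f(1) hh h(1)] obtain f' where f': "rec_in (real_oracle z) 1 f'" "\<forall>xs. length xs = 1 \<longrightarrow> f' xs = f xs"
    by blast
  have "\<forall>n. f' [n] = real_oracle x n" using f'(2) f(2) by simp
  then show "\<exists>f. rec_in (real_oracle z) 1 f \<and> (\<forall>n. f [n] = real_oracle x n)" using f'(1) by blast
qed

lemma in_tdeg_self: "x \<in> tdeg x"
  unfolding tdeg_def turing_equiv_def using turing_le_refl by simp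

lemma turing_equiv_tdeg: "tdeg x = tdeg y \<longleftrightarrow> x \<equiv>\<^sub>T y"
proof
  assume "tdeg x = tdeg y"
  then have "x \<in> tdeg y" using in_tdeg_self[of x] by simp
  then show "x \<equiv>\<^sub>T y" unfolding tdeg_def by simp
next
  assume a: "x \<equiv>\<^sub>T y"
  have "z \<equiv>\<^sub>T x \<longleftrightarrow> z \<equiv>\<^sub>T y" for z
    using a turing_le_trans unfolding turing_equiv_def by meson
  then show "tdeg x = tdeg y" unfolding tdeg_def by simp
qed

lemma real_oracle_inj: "real_oracle x = real_oracle y \<Longrightarrow> x = y"
proof (rule ccontr)
  assume a: "real_oracle x = real_oracle y" and ne: "x \<noteq> y"
  have fl: "\<lfloor>x * 2 ^ n\<rfloor> = \<lfloor>y * 2 ^ n\<rfloor>" for n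
  proof -
    have "int_encode \<lfloor>x * 2 ^ n\<rfloor> = int_encode \<lfloor>y * 2 ^ n\<rfloor>" using fun_cong[OF a, of n] unfolding real_oracle_def .
    then show ?thesis by (simp add: int_encode_eq)
  qed
  have b: "\<bar>x - y\<bar> * 2 ^ n < 1" for n :: nat
  proof -
    have f1: "of_int \<lfloor>x * 2 ^ n\<rfloor> \<le> x * 2 ^ n" "x * 2 ^ n < of_int \<lfloor>x * 2 ^ n\<rfloor> + 1"
      by (rule of_int_floor_le, rule real_of_int_floor_add_one_gt)
    have f2: "of_int \<lfloor>y * 2 ^ n\<rfloor> \<le> y * 2 ^ n" "y * 2 ^ n < of_int \<lfloor>y * 2 ^ n\<rfloor> + 1"
      by (rule of_int_floor_le, rule real_of_int_floor_add_one_gt)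
    have "\<bar>x * 2 ^ n - y * 2 ^ n\<bar> < 1"
    proof -
      have e: "(of_int \<lfloor>y * 2 ^ n\<rfloor> :: real) = of_int \<lfloor>x * 2 ^ n\<rfloor>" using fl[of n] by simp
      show ?thesis unfolding abs_less_iff using f1 f2 e by linarith
    qed
    have "x * 2 ^ n - y * 2 ^ n = (x - y) * 2 ^ n" by (simp add: algebra_simps)
    then have "\<bar>(x - y) * 2 ^ n\<bar> < 1" using \<open>\<bar>x * 2 ^ n - y * 2 ^ n\<bar> < 1\<close> by simp
    then show ?thesis by (simp add: abs_mult)
  qed
  have pos: "\<bar>x - y\<bar> > 0" using ne by simp
  obtain n :: nat where n: "1 / \<bar>x - y\<bar> < 2 ^ n" using real_arch_pow[of 2 "1 / \<bar>x - y\<bar>"] by auto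
  have "1 < \<bar>x - y\<bar> * 2 ^ n" using n pos by (simp add: divide_less_eq mult.commute)
  then show False using b[of n] by simp
qed
lemma countable_below: "countable {y. y \<le>\<^sub>T x}"
proof -
  have "\<forall>y\<in>{y. y \<le>\<^sub>T x}. \<exists>p. \<forall>n. ev (real_oracle x) p [n] (real_oracle y n)"
  proof
    fix y assume "y \<in> {y. y \<le>\<^sub>T x}"
    then obtain f where f: "rec_in (real_oracle x) 1 f" "\<forall>n. f [n] = real_oracle y n"
      unfolding turing_le_def turing_reducible_fun_def by blast
    from rec_in_prog[OF f(1)] obtain p where "\<forall>xs. length xs = 1 \<longrightarrow> ev (real_oracle x) p xs (f xs)" by blast
    then have "ev (real_oracle x) p [n] (f [n])" for n by simp
    then show "\<exists>p. \<forall>n. ev (real_oracle x) p [n] (real_oracle y n)" using f(2) by auto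
  qed
  then have "\<forall>y. \<exists>p. y \<in> {y. y \<le>\<^sub>T x} \<longrightarrow> (\<forall>n. ev (real_oracle x) p [n] (real_oracle y n))" by blast
  from choice[OF this] obtain P where P: "\<And>y. y \<in> {y. y \<le>\<^sub>T x} \<Longrightarrow> \<forall>n. ev (real_oracle x) (P y) [n] (real_oracle y n)" by blast
  have "inj_on P {y. y \<le>\<^sub>T x}"
  proof (rule inj_onI)
    fix y y' assume "y \<in> {y. y \<le>\<^sub>T x}" "y' \<in> {y. y \<le>\<^sub>T x}" "P y = P y'"
    then have "real_oracle y n = real_oracle y' n" for n
    proof -
      have "ev (real_oracle x) (P y) [n] (real_oracle y n)" using P \<open>y \<in> {y. y \<le>\<^sub>T x}\<close> by blast
      moreover have "ev (real_oracle x) (P y) [n] (real_oracle y' n)" using P \<open>y' \<in> {y. y \<le>\<^sub>T x}\<close> \<open>P y = P y'\<close> by metis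
      ultimately show ?thesis by (rule ev_det)
    qed
    then have "real_oracle y = real_oracle y'" by (rule ext)
    then show "y = y'" by (rule real_oracle_inj)
  qed
  then show ?thesis by (rule countableI')
qed

lemma countable_tdeg: "countable (tdeg x)"
  by (rule countable_subset[OF _ countable_below[of x]]) (auto simp: tdeg_def turing_equiv_def)


definition dg :: "(nat \<Rightarrow> bool) \<Rightarrow> nat \<Rightarrow> real" where
  "dg X i = (if X i then 2 else 1)"

definition Tl :: "(nat \<Rightarrow> bool) \<Rightarrow> nat \<Rightarrow> real" where
  "Tl X j = (\<Sum>n. dg X (n + j) / 4 ^ Suc n)"

definition Emb :: "(nat \<Rightarrow> bool) \<Rightarrow> real" where
  "Emb X = Tl X 0"

fun Nf :: "(nat \<Rightarrow> bool) \<Rightarrow> nat \<Rightarrow> int" where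
  "Nf X 0 = 0"
| "Nf X (Suc j) = 4 * Nf X j + (if X j then 2 else 1)"

lemma dg_bounds: "0 \<le> dg X i" "dg X i \<le> 2"
  unfolding dg_def by auto

lemma summable_Tl: "summable (\<lambda>n. dg X (n + j) / 4 ^ Suc n)"
proof (rule summable_comparison_test)
  show "\<exists>N. \<forall>n\<ge>N. norm (dg X (n + j) / 4 ^ Suc n) \<le> 2 / 4 * (1 / 4) ^ n"
    using dg_bounds[of X "_ + j"] by (auto simp: power_divide field_simps)
  show "summable (\<lambda>n. 2 / 4 * (1 / 4 :: real) ^ n)"
    by (rule summable_mult) (simp add: summable_geometric)
qed

lemma Tl_bounds: "0 \<le> Tl X j" "Tl X j < 1"
proof -
  show "0 \<le> Tl X j" unfolding Tl_def
    by (rule suminf_nonneg[OF summable_Tl]) (simp add: dg_bounds)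
  have g: "(\<lambda>n. 2 / 4 * (1 / 4 :: real) ^ n) sums (2 / 4 * (1 / (1 - 1 / 4)))"
    by (rule sums_mult) (rule geometric_sums, simp)
  have "Tl X j \<le> (\<Sum>n. 2 / 4 * (1 / 4 :: real) ^ n)" unfolding Tl_def
  proof (rule suminf_le)
    show "\<And>n. dg X (n + j) / 4 ^ Suc n \<le> 2 / 4 * (1 / 4) ^ n"
      using dg_bounds[of X "_ + j"] by (auto simp: power_divide field_simps)
  qed (use summable_Tl g in \<open>auto simp: sums_iff\<close>)
  also have "\<dots> = 2 / 3" using g by (simp add: sums_iff)
  finally show "Tl X j < 1" by simp
qed

lemma Tl_step: "Tl X j = dg X j / 4 + Tl X (Suc j) / 4"
proof -
  have s: "summable (\<lambda>n. dg X (n + j) / 4 ^ Suc n)" by (rule summable_Tl)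
  have "(\<Sum>n. dg X (Suc n + j) / 4 ^ Suc (Suc n)) = Tl X j - dg X (0 + j) / 4 ^ Suc 0"
    unfolding Tl_def using suminf_split_head[OF s] by simp
  moreover have "(\<lambda>n. dg X (Suc n + j) / 4 ^ Suc (Suc n)) = (\<lambda>n. (dg X (n + Suc j) / 4 ^ Suc n) / 4)"
    by (auto simp: field_simps)
  moreover have "(\<Sum>n. (dg X (n + Suc j) / 4 ^ Suc n) / 4) = Tl X (Suc j) / 4"
    unfolding Tl_def by (rule suminf_divide[OF summable_Tl])
  ultimately show ?thesis by simp
qed

lemma Emb_scaled: "Emb X * 4 ^ j = of_int (Nf X j) + Tl X j"
proof (induction j)
  case 0 then show ?case by (simp add: Emb_def)
next
  case (Suc j)
  have "Emb X * 4 ^ Suc j = 4 * (of_int (Nf X j) + Tl X j)" using Suc by simp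
  also have "\<dots> = 4 * of_int (Nf X j) + dg X j + Tl X (Suc j)" using Tl_step[of X j] by simp
  also have "\<dots> = of_int (Nf X (Suc j)) + Tl X (Suc j)" by (simp add: dg_def)
  finally show ?case .
qed

lemma floor_add_frac_div:
  fixes N K :: int and t :: real
  assumes "K > 0" "0 \<le> t" "t < 1"
  shows "\<lfloor>(of_int N + t) / of_int K\<rfloor> = N div K"
proof -
  have K: "of_int K > (0::real)" using assms by simp
  have "of_int (N div K) \<le> (of_int N + t) / of_int K"
  proof -
    have "N mod K \<ge> 0" using assms(1) by simp
    moreover have "N = N div K * K + N mod K" by simp
    ultimately have "N div K * K \<le> N" by linarith
    then have "of_int (N div K * K) \<le> (of_int N :: real)" by (simp only: of_int_le_iff)
    then have "of_int (N div K) * of_int K \<le> of_int N + t" using assms by simp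
    then show ?thesis using K by (simp add: le_divide_eq)
  qed
  moreover have "(of_int N + t) / of_int K < of_int (N div K) + 1"
  proof -
    have m: "N mod K < K" using assms(1) by simp
    have d: "N = N div K * K + N mod K" by simp
    have e: "(N div K + 1) * K = N div K * K + K" by (simp add: distrib_right)
    have "N + 1 \<le> (N div K + 1) * K" using m d e by linarith
    then have "of_int (N + 1) \<le> (of_int ((N div K + 1) * K) :: real)" by (simp only: of_int_le_iff)
    then have "of_int N + 1 \<le> (of_int (N div K) + 1) * (of_int K :: real)" by simp
    then have "of_int N + t < (of_int (N div K) + 1) * of_int K" using assms by simp
    then show ?thesis using K by (simp add: divide_less_eq)
  qed
  ultimately show ?thesis by (simp add: floor_eq_iff)
qed

lemma real_oracle_Emb: "real_oracle (Emb X) m = int_encode (Nf X m div 2 ^ m)"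
proof -
  have f: "(4::real) ^ m = 2 ^ m * 2 ^ m"
  proof -
    have "(4::real) ^ m = (2 * 2) ^ m" by simp
    also have "\<dots> = 2 ^ m * 2 ^ m" by (rule power_mult_distrib)
    finally show ?thesis .
  qed
  have "Emb X * 2 ^ m = (Emb X * 4 ^ m) / 2 ^ m"
    unfolding f by simp
  also have "\<dots> = (of_int (Nf X m) + Tl X m) / of_int (2 ^ m)" by (simp add: Emb_scaled)
  finally have "\<lfloor>Emb X * 2 ^ m\<rfloor> = Nf X m div 2 ^ m"
    using floor_add_frac_div[of "2 ^ m" "Tl X m" "Nf X m"] Tl_bounds[of X m] by simp
  then show ?thesis unfolding real_oracle_def by simp
qed

lemma Nf_local: "(\<forall>i<j. X i = Y i) \<Longrightarrow> Nf X j = Nf Y j"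
  by (induction j) auto

lemma real_oracle_Emb_local: "(\<forall>i<m. X i = Y i) \<Longrightarrow> real_oracle (Emb X) m = real_oracle (Emb Y) m"
  using Nf_local[of m X Y] by (simp add: real_oracle_Emb)

lemma real_oracle_Emb_even: "real_oracle (Emb X) (2 * j) = int_encode (Nf X j)"
proof -
  have "Emb X * 2 ^ (2 * j) = of_int (Nf X j) + Tl X j"
    using Emb_scaled[of X j] by (simp add: power_mult)
  then have "\<lfloor>Emb X * 2 ^ (2 * j)\<rfloor> = Nf X j" using Tl_bounds[of X j] by (simp add: floor_eq_iff)
  then show ?thesis unfolding real_oracle_def by simp
qed

lemma Nf_split: "(\<forall>i<j. X i = Y i) \<Longrightarrow> X j \<noteq> Y j \<Longrightarrow> Nf X (Suc j) \<noteq> Nf Y (Suc j)"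
proof -
  assume a: "\<forall>i<j. X i = Y i" and b: "X j \<noteq> Y j"
  have e: "Nf X j = Nf Y j" using Nf_local[OF a] .
  show ?thesis
  proof (cases "X j")
    case True then have "\<not> Y j" using b by simp
    then show ?thesis using True e by simp
  next
    case False then have "Y j" using b by simp
    then show ?thesis using False e by simp
  qed
qed

lemma Emb_inj: "inj Emb"
proof (rule injI, rule ccontr)
  fix X Y assume e: "Emb X = Emb Y" and ne: "X \<noteq> Y"
  then obtain i where "X i \<noteq> Y i" by auto
  define j where "j = (LEAST i. X i \<noteq> Y i)"
  have j1: "X j \<noteq> Y j"
    using LeastI[of "\<lambda>i. X i \<noteq> Y i", OF \<open>X i \<noteq> Y i\<close>] unfolding j_def .
  have j2: "\<forall>i<j. X i = Y i"
  proof (intro allI impI)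
    fix i assume "i < j"
    then have "\<not> (X i \<noteq> Y i)" unfolding j_def by (rule not_less_Least)
    then show "X i = Y i" by simp
  qed
  note j = j1 j2
  have "real_oracle (Emb X) (2 * Suc j) \<noteq> real_oracle (Emb Y) (2 * Suc j)"
    unfolding real_oracle_Emb_even using Nf_split[OF j(2) j(1)] by (simp add: int_encode_eq)
  then show False using e by simp
qed


definition ext :: "bool list \<Rightarrow> (nat \<Rightarrow> bool) \<Rightarrow> bool" where
  "ext \<sigma> X \<longleftrightarrow> (\<forall>i<length \<sigma>. X i = \<sigma> ! i)"

definition pref :: "(nat \<Rightarrow> bool) \<Rightarrow> nat \<Rightarrow> bool list" where
  "pref X n = map X [0..<n]"

definition goodR :: "(nat \<Rightarrow> (nat \<Rightarrow> bool) \<Rightarrow> (nat \<Rightarrow> bool) \<Rightarrow> bool) \<Rightarrow> nat \<Rightarrow> bool list \<Rightarrow> bool list \<Rightarrow> bool" where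
  "goodR R k \<sigma> \<tau> \<longleftrightarrow> (\<forall>X Y. ext \<sigma> X \<longrightarrow> ext \<tau> Y \<longrightarrow> R k X Y)"

lemma ext_prefix: "prefix \<sigma> \<sigma>' \<Longrightarrow> ext \<sigma>' X \<Longrightarrow> ext \<sigma> X"
  unfolding ext_def prefix_def by (auto simp: nth_append)

lemma goodR_mono: "goodR R k \<sigma> \<tau> \<Longrightarrow> prefix \<sigma> \<sigma>' \<Longrightarrow> prefix \<tau> \<tau>' \<Longrightarrow> goodR R k \<sigma>' \<tau>'"
  unfolding goodR_def using ext_prefix by blast

definition handle :: "(nat \<Rightarrow> (nat \<Rightarrow> bool) \<Rightarrow> (nat \<Rightarrow> bool) \<Rightarrow> bool) \<Rightarrow> nat \<times> bool list \<times> bool list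
    \<Rightarrow> (bool list \<Rightarrow> bool list) \<Rightarrow> (bool list \<Rightarrow> bool list)" where
  "handle R kst T = (case kst of (k, \<sigma>, \<tau>) \<Rightarrow>
     (let p = SOME p. prefix (T \<sigma>) (fst p) \<and> prefix (T \<tau>) (snd p) \<and> goodR R k (fst p) (snd p)
      in T(\<sigma> := fst p, \<tau> := snd p)))"

locale splitting =
  fixes R :: "nat \<Rightarrow> (nat \<Rightarrow> bool) \<Rightarrow> (nat \<Rightarrow> bool) \<Rightarrow> bool"
  assumes split: "\<And>k \<sigma> \<tau>. \<exists>\<sigma>' \<tau>'. prefix \<sigma> \<sigma>' \<and> prefix \<tau> \<tau>' \<and> goodR R k \<sigma>' \<tau>'"
begin

lemma handle_props:
  assumes "\<sigma> \<noteq> \<tau>"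
  shows "\<forall>\<rho>. prefix (T \<rho>) (handle R (k, \<sigma>, \<tau>) T \<rho>)"
    and "goodR R k (handle R (k, \<sigma>, \<tau>) T \<sigma>) (handle R (k, \<sigma>, \<tau>) T \<tau>)"
proof -
  define p where "p = (SOME p. prefix (T \<sigma>) (fst p) \<and> prefix (T \<tau>) (snd p) \<and> goodR R k (fst p) (snd p))"
  have "\<exists>p. prefix (T \<sigma>) (fst p) \<and> prefix (T \<tau>) (snd p) \<and> goodR R k (fst p) (snd p)"
    using split[of "T \<sigma>" "T \<tau>" k] by auto
  then have p: "prefix (T \<sigma>) (fst p) \<and> prefix (T \<tau>) (snd p) \<and> goodR R k (fst p) (snd p)"
    unfolding p_def by (rule someI_ex)
  have h: "handle R (k, \<sigma>, \<tau>) T = T(\<sigma> := fst p, \<tau> := snd p)"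
    unfolding handle_def p_def by (simp add: Let_def)
  show "\<forall>\<rho>. prefix (T \<rho>) (handle R (k, \<sigma>, \<tau>) T \<rho>)"
    unfolding h using p assms by auto
  show "goodR R k (handle R (k, \<sigma>, \<tau>) T \<sigma>) (handle R (k, \<sigma>, \<tau>) T \<tau>)"
    unfolding h using p assms by auto
qed

lemma fold_handle:
  assumes "\<forall>(k, \<sigma>, \<tau>)\<in>set L. \<sigma> \<noteq> \<tau>"
  shows "(\<forall>\<rho>. prefix (T \<rho>) (fold (handle R) L T \<rho>)) \<and>
         (\<forall>(k, \<sigma>, \<tau>)\<in>set L. goodR R k (fold (handle R) L T \<sigma>) (fold (handle R) L T \<tau>))"
  using assms
proof (induction L arbitrary: T)
  case Nil then show ?case by simp
next
  case (Cons a L)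
  obtain k \<sigma> \<tau> where a: "a = (k, \<sigma>, \<tau>)" by (cases a) auto
  have ne: "\<sigma> \<noteq> \<tau>" using Cons.prems a by auto
  let ?T1 = "handle R a T"
  have IH: "(\<forall>\<rho>. prefix (?T1 \<rho>) (fold (handle R) L ?T1 \<rho>)) \<and>
         (\<forall>(k, \<sigma>, \<tau>)\<in>set L. goodR R k (fold (handle R) L ?T1 \<sigma>) (fold (handle R) L ?T1 \<tau>))"
    using Cons.IH[of ?T1] Cons.prems by auto
  have f: "fold (handle R) (a # L) T = fold (handle R) L ?T1" by simp
  have p1: "\<forall>\<rho>. prefix (T \<rho>) (?T1 \<rho>)" using handle_props(1)[OF ne] a by simp
  have g1: "goodR R k (?T1 \<sigma>) (?T1 \<tau>)" using handle_props(2)[OF ne] a by simp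
  show ?case
  proof (intro conjI)
    show "\<forall>\<rho>. prefix (T \<rho>) (fold (handle R) (a # L) T \<rho>)"
      unfolding f using p1 IH prefix_order.trans by blast
    have "goodR R k (fold (handle R) L ?T1 \<sigma>) (fold (handle R) L ?T1 \<tau>)"
      using goodR_mono[OF g1] IH by blast
    then show "\<forall>(k, \<sigma>, \<tau>)\<in>set (a # L). goodR R k (fold (handle R) (a # L) T \<sigma>) (fold (handle R) (a # L) T \<tau>)"
      unfolding f using IH a by auto
  qed
qed

definition trip :: "nat \<Rightarrow> (nat \<times> bool list \<times> bool list) list" where
  "trip s = filter (\<lambda>(k, \<sigma>, \<tau>). \<sigma> \<noteq> \<tau>)
     (List.product [0..<Suc s] (List.product (List.n_lists (Suc s) [True, False]) (List.n_lists (Suc s) [True, False])))"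

lemma set_trip: "(k, \<sigma>, \<tau>) \<in> set (trip s) \<longleftrightarrow> k \<le> s \<and> length \<sigma> = Suc s \<and> length \<tau> = Suc s \<and> \<sigma> \<noteq> \<tau>"
proof -
  have "set (List.n_lists (Suc s) [True, False]) = {xs. length xs = Suc s}"
    by (simp only: set_n_lists) auto
  then show ?thesis unfolding trip_def by (simp only: set_filter set_product) auto
qed

lemma trip_ne: "\<forall>(k, \<sigma>, \<tau>)\<in>set (trip s). \<sigma> \<noteq> \<tau>"
  using set_trip by auto

fun Tr :: "nat \<Rightarrow> bool list \<Rightarrow> bool list" where
  "Tr 0 = (\<lambda>\<rho>. [])"
| "Tr (Suc s) = fold (handle R) (trip s) (\<lambda>\<rho>. Tr s (butlast \<rho>) @ [last \<rho>])"

lemma Tr_step: "prefix (Tr s (butlast \<rho>) @ [last \<rho>]) (Tr (Suc s) \<rho>)"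
  using fold_handle[OF trip_ne[of s], where T="\<lambda>\<rho>. Tr s (butlast \<rho>) @ [last \<rho>]"] by simp

lemma Tr_good: "(k, \<sigma>, \<tau>) \<in> set (trip s) \<Longrightarrow> goodR R k (Tr (Suc s) \<sigma>) (Tr (Suc s) \<tau>)"
  using fold_handle[OF trip_ne[of s], where T="\<lambda>\<rho>. Tr s (butlast \<rho>) @ [last \<rho>]"] by auto

lemma Tr_len: "s \<le> length (Tr s \<rho>)"
proof (induction s arbitrary: \<rho>)
  case 0 then show ?case by simp
next
  case (Suc s)
  have "length (Tr s (butlast \<rho>) @ [last \<rho>]) \<le> length (Tr (Suc s) \<rho>)"
    using Tr_step[of s \<rho>] by (rule prefix_length_le)
  then show ?case using Suc[of "butlast \<rho>"] by simp
qed

lemma pref_Suc: "butlast (pref b (Suc s)) = pref b s" "last (pref b (Suc s)) = b s"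
  unfolding pref_def by simp_all

lemma Tr_chain1: "prefix (Tr s (pref b s)) (Tr (Suc s) (pref b (Suc s)))"
proof -
  have "prefix (Tr s (pref b s)) (Tr s (pref b s) @ [b s])" by simp
  then show ?thesis using Tr_step[of s "pref b (Suc s)"] unfolding pref_Suc
    using prefix_order.trans by blast
qed

lemma Tr_chain: "s \<le> s' \<Longrightarrow> prefix (Tr s (pref b s)) (Tr s' (pref b s'))"
proof (induction s' rule: dec_induct)
  case base then show ?case by simp
next
  case (step n) then show ?case using Tr_chain1[of n b] prefix_order.trans by blast
qed

definition FF :: "(nat \<Rightarrow> bool) \<Rightarrow> nat \<Rightarrow> bool" where
  "FF b n = Tr (Suc n) (pref b (Suc n)) ! n"

lemma prefix_nth: "prefix xs ys \<Longrightarrow> i < length xs \<Longrightarrow> ys ! i = xs ! i"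
  unfolding prefix_def by (auto simp: nth_append)

lemma FF_ext: "ext (Tr s (pref b s)) (FF b)"
  unfolding ext_def
proof (intro allI impI)
  fix i assume i: "i < length (Tr s (pref b s))"
  let ?m = "max s (Suc i)"
  have a: "prefix (Tr s (pref b s)) (Tr ?m (pref b ?m))" by (rule Tr_chain) simp
  have b: "prefix (Tr (Suc i) (pref b (Suc i))) (Tr ?m (pref b ?m))" by (rule Tr_chain) simp
  have li: "i < length (Tr (Suc i) (pref b (Suc i)))" using Tr_len[of "Suc i" "pref b (Suc i)"] by simp
  have "Tr ?m (pref b ?m) ! i = Tr s (pref b s) ! i" by (rule prefix_nth[OF a i])
  moreover have "Tr ?m (pref b ?m) ! i = Tr (Suc i) (pref b (Suc i)) ! i" by (rule prefix_nth[OF b li])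
  ultimately show "FF b i = Tr s (pref b s) ! i" unfolding FF_def by simp
qed

lemma FF_R: assumes "b \<noteq> b'" shows "R k (FF b) (FF b')"
proof -
  obtain d where d: "b d \<noteq> b' d" using assms by auto
  define s where "s = max k d"
  have ne: "pref b (Suc s) \<noteq> pref b' (Suc s)"
  proof
    assume "pref b (Suc s) = pref b' (Suc s)"
    then have "pref b (Suc s) ! d = pref b' (Suc s) ! d" by simp
    moreover have "d < Suc s" unfolding s_def by simp
    ultimately have "b d = b' d" unfolding pref_def by (simp del: upt_Suc)
    then show False using d by simp
  qed
  have "(k, pref b (Suc s), pref b' (Suc s)) \<in> set (trip s)"
    unfolding set_trip using ne by (simp add: pref_def s_def)
  then have "goodR R k (Tr (Suc s) (pref b (Suc s))) (Tr (Suc s) (pref b' (Suc s)))" by (rule Tr_good)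
  then show ?thesis unfolding goodR_def using FF_ext by blast
qed

end

lemma mycielski:
  assumes "\<And>k \<sigma> \<tau>. \<exists>\<sigma>' \<tau>'. prefix \<sigma> \<sigma>' \<and> prefix \<tau> \<tau>' \<and> goodR R k \<sigma>' \<tau>'"
  shows "\<exists>F. \<forall>b b' :: nat \<Rightarrow> bool. b \<noteq> b' \<longrightarrow> (\<forall>k. R k (F b) (F b'))"
proof -
  interpret splitting R using assms by unfold_locales
  show ?thesis by (rule exI[of _ FF]) (auto intro: FF_R)
qed


lemma turing_le_prog: "x \<le>\<^sub>T y \<Longrightarrow> \<exists>p. \<forall>n. ev (real_oracle y) p [n] (real_oracle x n)"
proof -
  assume "x \<le>\<^sub>T y"
  then obtain f where f: "rec_in (real_oracle y) 1 f" "\<forall>n. f [n] = real_oracle x n"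
    unfolding turing_le_def turing_reducible_fun_def by blast
  from rec_in_prog[OF f(1)] obtain p where "\<forall>xs. length xs = 1 \<longrightarrow> ev (real_oracle y) p xs (f xs)" by blast
  then have "ev (real_oracle y) p [n] (f [n])" for n by simp
  then show "\<exists>p. \<forall>n. ev (real_oracle y) p [n] (real_oracle x n)" using f(2) by auto
qed

lemma ext_append1: "ext (\<sigma> @ [b]) X \<longleftrightarrow> ext \<sigma> X \<and> X (length \<sigma>) = b"
  unfolding ext_def by (auto simp: nth_append less_Suc_eq)

lemma ext_pref: "ext (pref Y L) Y' \<longleftrightarrow> (\<forall>i<L. Y' i = Y i)"
  unfolding ext_def pref_def by simp

lemma ext_prefix_pref: "ext \<tau> Y \<Longrightarrow> length \<tau> \<le> L \<Longrightarrow> prefix \<tau> (pref Y L)"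
proof -
  assume a: "ext \<tau> Y" "length \<tau> \<le> L"
  have "\<tau> = pref Y (length \<tau>)" using a(1) unfolding ext_def pref_def by (intro nth_equalityI) auto
  moreover have "pref Y L = pref Y (length \<tau>) @ map Y [length \<tau>..<L]"
    unfolding pref_def using a(2) by (metis map_append upt_add_eq_append zero_le le_add_diff_inverse)
  ultimately show ?thesis unfolding prefix_def by metis
qed

definition Rc :: "nat \<Rightarrow> (nat \<Rightarrow> bool) \<Rightarrow> (nat \<Rightarrow> bool) \<Rightarrow> bool" where
  "Rc k X Y \<longleftrightarrow> \<not> (\<forall>n. ev (real_oracle (Emb Y)) (from_nat k) [n] (real_oracle (Emb X) n))"

lemma split_distinct:
  assumes "ext (\<sigma> @ [True]) X" "ext (\<sigma> @ [False]) X'"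
  shows "real_oracle (Emb X) (2 * Suc (length \<sigma>)) \<noteq> real_oracle (Emb X') (2 * Suc (length \<sigma>))"
proof -
  have "ext \<sigma> X" "ext \<sigma> X'" using assms ext_append1 by simp_all
  then have a: "\<forall>i<length \<sigma>. X i = X' i" unfolding ext_def by simp
  have b: "X (length \<sigma>) \<noteq> X' (length \<sigma>)" using assms unfolding ext_append1 by simp
  show ?thesis unfolding real_oracle_Emb_even using Nf_split[OF a b] by (simp add: int_encode_eq)
qed

lemma Rc_split: "\<exists>\<sigma>' \<tau>'. prefix \<sigma> \<sigma>' \<and> prefix \<tau> \<tau>' \<and> goodR Rc k \<sigma>' \<tau>'"
proof -
  define p where "p = (from_nat k :: prog)"
  define n where "n = 2 * Suc (length \<sigma>)"
  show ?thesis
  proof (cases "\<exists>Y v. ext \<tau> Y \<and> ev (real_oracle (Emb Y)) p [n] v")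
    case False
    have "goodR Rc k \<sigma> \<tau>" unfolding goodR_def Rc_def
    proof (intro allI impI)
      fix X Y assume "ext \<sigma> X" "ext \<tau> Y"
      then show "\<not> (\<forall>n. ev (real_oracle (Emb Y)) (from_nat k) [n] (real_oracle (Emb X) n))"
        using False unfolding p_def by blast
    qed
    then show ?thesis by blast
  next
    case True
    then obtain Y v where Y: "ext \<tau> Y" and ev: "ev (real_oracle (Emb Y)) p [n] v" by blast
    from ev_use[OF ev] obtain N where N: "uses (real_oracle (Emb Y)) p [n] v N" by blast
    define \<tau>' where "\<tau>' = pref Y (max N (length \<tau>))"
    have pt: "prefix \<tau> \<tau>'" unfolding \<tau>'_def by (rule ext_prefix_pref[OF Y]) simp
    have evY: "ev (real_oracle (Emb Y')) p [n] v" if "ext \<tau>' Y'" for Y'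
    proof -
      have "\<forall>i<max N (length \<tau>). Y' i = Y i" using that unfolding \<tau>'_def ext_pref .
      then have "\<forall>u<N. real_oracle (Emb Y') u = real_oracle (Emb Y) u"
        using real_oracle_Emb_local by simp
      then show ?thesis using N unfolding uses_def by blast
    qed
    define \<sigma>' where "\<sigma>' = (if (\<exists>X. ext (\<sigma> @ [True]) X \<and> real_oracle (Emb X) n = v) then \<sigma> @ [False] else \<sigma> @ [True])"
    have ps: "prefix \<sigma> \<sigma>'" unfolding \<sigma>'_def by simp
    have "goodR Rc k \<sigma>' \<tau>'" unfolding goodR_def Rc_def
    proof (intro allI impI notI)
      fix X Y' assume X: "ext \<sigma>' X" and Y': "ext \<tau>' Y'"
        and c: "\<forall>n. ev (real_oracle (Emb Y')) (from_nat k) [n] (real_oracle (Emb X) n)"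
      have "ev (real_oracle (Emb Y')) p [n] (real_oracle (Emb X) n)" using c unfolding p_def by blast
      then have Xv: "real_oracle (Emb X) n = v" using ev_det evY[OF Y'] by blast
      show False
      proof (cases "\<exists>X. ext (\<sigma> @ [True]) X \<and> real_oracle (Emb X) n = v")
        case True
        then obtain X0 where X0: "ext (\<sigma> @ [True]) X0" "real_oracle (Emb X0) n = v" by blast
        have "ext (\<sigma> @ [False]) X" using X True unfolding \<sigma>'_def by simp
        from split_distinct[OF X0(1) this] show False using X0(2) Xv unfolding n_def by simp
      next
        case False
        have "ext (\<sigma> @ [True]) X" using X False unfolding \<sigma>'_def by simp
        then show False using False Xv by blast
      qed
    qed
    then show ?thesis using ps pt by blast
  qed
qed

lemma perfect_antichain: "\<exists>G :: (nat \<Rightarrow> bool) \<Rightarrow> real. inj G \<and> (\<forall>b b'. b \<noteq> b' \<longrightarrow> \<not> G b \<le>\<^sub>T G b')"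
proof -
  obtain F where F: "\<forall>b b' :: nat \<Rightarrow> bool. b \<noteq> b' \<longrightarrow> (\<forall>k. Rc k (F b) (F b'))"
    using mycielski[of Rc, OF Rc_split] by blast
  have nle: "\<not> Emb (F b) \<le>\<^sub>T Emb (F b')" if "b \<noteq> b'" for b b'
  proof
    assume "Emb (F b) \<le>\<^sub>T Emb (F b')"
    then obtain p where p: "\<forall>n. ev (real_oracle (Emb (F b'))) p [n] (real_oracle (Emb (F b)) n)"
      using turing_le_prog by blast
    have "Rc (to_nat p) (F b) (F b')" using F that by blast
    then show False using p unfolding Rc_def by simp
  qed
  have "inj (\<lambda>b. Emb (F b))"
  proof (rule injI, rule ccontr)
    fix b b' assume "Emb (F b) = Emb (F b')" "b \<noteq> b'"
    then show False using nle[of b b'] turing_le_refl by metis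
  qed
  then show ?thesis using nle by blast
qed


definition small :: "'a set \<Rightarrow> bool" where
  "small A \<longleftrightarrow> |A| <o |UNIV :: (nat \<Rightarrow> bool) set|"

lemma uncountable_K: "\<not> countable (UNIV :: (nat \<Rightarrow> bool) set)"
proof
  assume "countable (UNIV :: (nat \<Rightarrow> bool) set)"
  then have "range (from_nat_into (UNIV :: (nat \<Rightarrow> bool) set)) = UNIV"
    by (intro range_from_nat_into) simp_all
  then have "(\<lambda>n. \<not> from_nat_into (UNIV :: (nat \<Rightarrow> bool) set) n n) \<in> range (from_nat_into (UNIV :: (nat \<Rightarrow> bool) set))"
    by simp
  then obtain m where m: "(\<lambda>n. \<not> from_nat_into (UNIV :: (nat \<Rightarrow> bool) set) n n) = from_nat_into (UNIV :: (nat \<Rightarrow> bool) set) m"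
    by (rule rangeE)
  then show False using fun_cong[OF m, of m] by simp
qed

lemma countable_ordLeq_nat: "countable A \<Longrightarrow> |A| \<le>o |UNIV :: nat set|"
proof -
  assume "countable A"
  then obtain f :: "_ \<Rightarrow> nat" where "inj_on f A" unfolding countable_def by blast
  then have "\<exists>f :: _ \<Rightarrow> nat. inj_on f A \<and> f ` A \<subseteq> UNIV" by blast
  then show ?thesis unfolding card_of_ordLeq .
qed

lemma nat_less_K: "|UNIV :: nat set| <o |UNIV :: (nat \<Rightarrow> bool) set|"
proof -
  have "\<not> |UNIV :: (nat \<Rightarrow> bool) set| \<le>o |UNIV :: nat set|"
  proof
    assume "|UNIV :: (nat \<Rightarrow> bool) set| \<le>o |UNIV :: nat set|"
    then have "\<exists>f :: (nat \<Rightarrow> bool) \<Rightarrow> nat. inj_on f UNIV \<and> f ` UNIV \<subseteq> UNIV"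
      unfolding card_of_ordLeq[symmetric] .
    then obtain f :: "(nat \<Rightarrow> bool) \<Rightarrow> nat" where "inj_on f UNIV" by blast
    then have "countable (UNIV :: (nat \<Rightarrow> bool) set)" by (rule countableI)
    then show False using uncountable_K by simp
  qed
  then show ?thesis using not_ordLeq_iff_ordLess[OF card_of_Well_order[of "UNIV :: nat set"] card_of_Well_order[of "UNIV :: (nat \<Rightarrow> bool) set"]] by simp
qed

lemma countable_small: "countable A \<Longrightarrow> small A"
  unfolding small_def by (rule ordLeq_ordLess_trans[OF countable_ordLeq_nat nat_less_K])

lemma small_subset: "A \<subseteq> B \<Longrightarrow> small B \<Longrightarrow> small A"
  unfolding small_def by (rule ordLeq_ordLess_trans[OF card_of_mono1])

lemma small_image: "small A \<Longrightarrow> small (f ` A)"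
  unfolding small_def by (rule ordLeq_ordLess_trans[OF card_of_image])

lemma infinite_K: "\<not> finite (UNIV :: (nat \<Rightarrow> bool) set)"
  using uncountable_K countable_finite by blast

lemma small_Un: "small A \<Longrightarrow> small B \<Longrightarrow> small (A \<union> B)"
  unfolding small_def by (rule card_of_Un_ordLess_infinite[OF infinite_K])

lemma small_UN:
  assumes "small A" "\<forall>a\<in>A. countable (B a)"
  shows "small (\<Union>a\<in>A. B a)"
proof (cases "finite A")
  case True
  then have "countable (\<Union>a\<in>A. B a)" using assms(2) by (intro countable_UN) (auto intro: countable_finite)
  then show ?thesis by (rule countable_small)
next
  case False
  have "\<forall>a\<in>A. |B a| \<le>o |A|"
  proof
    fix a assume "a \<in> A"
    then have "countable (B a)" using assms(2) by blast
    then have "|B a| \<le>o |UNIV :: nat set|" by (rule countable_ordLeq_nat)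
    moreover have "|UNIV :: nat set| \<le>o |A|" using False unfolding infinite_iff_card_of_nat .
    ultimately show "|B a| \<le>o |A|" by (rule ordLeq_transitive)
  qed
  then have "|\<Union>a\<in>A. B a| \<le>o |A|" by (rule card_of_UNION_ordLeq_infinite[OF False ordLeq_refl[OF card_of_Card_order]])
  then show ?thesis using assms(1) unfolding small_def by (rule ordLeq_ordLess_trans)
qed

lemma small_Times: "small A \<Longrightarrow> small (A \<times> A)"
proof (cases "finite A")
  case True
  then show ?thesis by (intro countable_small countable_finite) simp
next
  case False
  assume "small A"
  have "|A \<times> A| =o |A|" using card_of_Times_same_infinite[OF False] .
  then show ?thesis using \<open>small A\<close> unfolding small_def by (rule ordIso_ordLess_trans)
qed

lemma not_small_K: "\<not> small (UNIV :: (nat \<Rightarrow> bool) set)"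
  unfolding small_def by (rule ordLess_irreflexive)

lemma eqpoll_small: "A \<approx> B \<Longrightarrow> small B \<Longrightarrow> small A"
  unfolding small_def eqpoll_iff_card_of_ordIso by (rule ordIso_ordLess_trans)

lemma small_underS: "small (underS |UNIV :: (nat \<Rightarrow> bool) set| a)"
proof -
  have "a \<in> Field |UNIV :: (nat \<Rightarrow> bool) set|" by (simp add: Field_card_of)
  then show ?thesis unfolding small_def by (rule card_of_underS[OF card_of_Card_order])
qed

lemma transfinite_choice:
  fixes P :: "'b set" and Fb :: "((nat \<Rightarrow> bool) \<Rightarrow> 'b) \<Rightarrow> (nat \<Rightarrow> bool) \<Rightarrow> 'b set"
  assumes loc: "\<And>h h' a. (\<forall>b \<in> underS |UNIV :: (nat \<Rightarrow> bool) set| a. h b = h' b) \<Longrightarrow> Fb h a = Fb h' a"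
    and avoid: "\<And>h a. \<exists>x \<in> P. x \<notin> Fb h a"
  shows "\<exists>g. \<forall>a. g a \<in> P \<and> g a \<notin> Fb g a"
proof -
  let ?r = "|UNIV :: (nat \<Rightarrow> bool) set|"
  have wo: "wo_rel ?r" unfolding wo_rel_def by (rule card_of_Well_order)
  have wf: "wf (?r - Id)" by (rule wo_rel.WF[OF wo])
  define H where "H = (\<lambda>h a. SOME x. x \<in> P \<and> x \<notin> Fb h a)"
  define g where "g = wfrec (?r - Id) H"
  have "g a \<in> P \<and> g a \<notin> Fb g a" for a
  proof -
    have ga: "g a = H (cut g (?r - Id) a) a" unfolding g_def by (rule wfrec[OF wf])
    have "\<forall>b \<in> underS ?r a. cut g (?r - Id) a b = g b"
      unfolding underS_def cut_def by auto
    then have F: "Fb (cut g (?r - Id) a) a = Fb g a" by (rule loc)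
    have "\<exists>x. x \<in> P \<and> x \<notin> Fb g a" using avoid by blast
    then have "H (cut g (?r - Id) a) a \<in> P \<and> H (cut g (?r - Id) a) a \<notin> Fb g a"
      unfolding H_def F by (rule someI_ex)
    then show ?thesis using ga by simp
  qed
  then show ?thesis by blast
qed

lemma underS_K_total:
  fixes a b :: "nat \<Rightarrow> bool"
  assumes "a \<noteq> b"
  shows "a \<in> underS |UNIV :: (nat \<Rightarrow> bool) set| b \<or> b \<in> underS |UNIV :: (nat \<Rightarrow> bool) set| a"
proof -
  have wo: "wo_rel |UNIV :: (nat \<Rightarrow> bool) set|" unfolding wo_rel_def by (rule card_of_Well_order)
  have "(a, b) \<in> |UNIV :: (nat \<Rightarrow> bool) set| \<or> (b, a) \<in> |UNIV :: (nat \<Rightarrow> bool) set|"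
    using wo_rel.TOTALS[OF wo] by (simp add: Field_card_of)
  then show ?thesis using assms unfolding underS_def by auto
qed

lemma underS_K_trans:
  fixes a b c :: "nat \<Rightarrow> bool"
  assumes "a \<in> underS |UNIV :: (nat \<Rightarrow> bool) set| b" "b \<in> underS |UNIV :: (nat \<Rightarrow> bool) set| c"
  shows "a \<in> underS |UNIV :: (nat \<Rightarrow> bool) set| c"
proof -
  have wo: "wo_rel |UNIV :: (nat \<Rightarrow> bool) set|" unfolding wo_rel_def by (rule card_of_Well_order)
  have t: "trans |UNIV :: (nat \<Rightarrow> bool) set|" by (rule wo_rel.TRANS[OF wo])
  have an: "antisym |UNIV :: (nat \<Rightarrow> bool) set|" by (rule wo_rel.ANTISYM[OF wo])
  have "(a, b) \<in> |UNIV :: (nat \<Rightarrow> bool) set|" "(b, c) \<in> |UNIV :: (nat \<Rightarrow> bool) set|" "a \<noteq> b" "b \<noteq> c"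
    using assms unfolding underS_def by auto
  then have "(a, c) \<in> |UNIV :: (nat \<Rightarrow> bool) set|" using t unfolding trans_def by blast
  moreover have "a \<noteq> c"
  proof
    assume "a = c"
    then have "(b, a) \<in> |UNIV :: (nat \<Rightarrow> bool) set|" using \<open>(b, c) \<in> _\<close> by simp
    then show False using an \<open>(a, b) \<in> _\<close> \<open>a \<noteq> b\<close> unfolding antisym_def by blast
  qed
  ultimately show ?thesis unfolding underS_def by auto
qed


definition NI :: "(real \<times> real) set \<Rightarrow> bool" where
  "NI A \<longleftrightarrow> (\<forall>x y x' y'. (x, y) \<in> A \<longrightarrow> (x', y') \<in> A \<longrightarrow> x < x' \<longrightarrow> y < y' \<longrightarrow> False)"

definition Gd :: "(real \<times> real) set \<Rightarrow> (real \<times> real) set" where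
  "Gd W = {(x, y). (\<forall>q\<in>\<rat>. \<forall>r\<in>\<rat>. q < x \<longrightarrow> r < y \<longrightarrow> (q, r) \<in> W) \<and>
                    (\<forall>q\<in>\<rat>. \<forall>r\<in>\<rat>. x < q \<longrightarrow> y < r \<longrightarrow> (q, r) \<notin> W)}"

definition thin :: "(real \<times> real) set \<Rightarrow> (real \<times> real) set" where
  "thin A = {(x, y). (x, y) \<in> A \<and> (\<forall>x'. (x', y) \<in> A \<longrightarrow> x' = x) \<and> (\<forall>y'. (x, y') \<in> A \<longrightarrow> y' = y)}"

definition mir :: "(real \<times> real) set \<Rightarrow> (real \<times> real) set" where
  "mir A = (\<lambda>(x, y). (x, - y)) ` A"

lemma mir_iff: "(x, y) \<in> mir A \<longleftrightarrow> (x, - y) \<in> A"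
proof
  assume "(x, y) \<in> mir A"
  then obtain a b where "(a, b) \<in> A" "(x, y) = (a, - b)" unfolding mir_def by auto
  then show "(x, - y) \<in> A" by simp
next
  assume a: "(x, - y) \<in> A"
  have "(x, y) = (\<lambda>(x, y). (x, - y)) (x, - y)" by simp
  then show "(x, y) \<in> mir A" unfolding mir_def using a by (rule image_eqI)
qed

lemma mir_mir: "mir (mir A) = A"
proof (rule set_eqI)
  fix p :: "real \<times> real"
  obtain x y where "p = (x, y)" by (cases p)
  then show "p \<in> mir (mir A) \<longleftrightarrow> p \<in> A" by (simp add: mir_iff)
qed

lemma thin_iff: "(x, y) \<in> thin A \<longleftrightarrow> (x, y) \<in> A \<and> (\<forall>x'. (x', y) \<in> A \<longrightarrow> x' = x) \<and> (\<forall>y'. (x, y') \<in> A \<longrightarrow> y' = y)"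
  unfolding thin_def by simp

lemma thin_sec1: "(x, y) \<in> thin A \<Longrightarrow> (x', y) \<in> thin A \<Longrightarrow> x' = x"
proof -
  assume a: "(x, y) \<in> thin A" "(x', y) \<in> thin A"
  have "\<forall>x'. (x', y) \<in> A \<longrightarrow> x' = x" using a(1) unfolding thin_iff by (elim conjE)
  moreover have "(x', y) \<in> A" using a(2) unfolding thin_iff by (elim conjE)
  ultimately show ?thesis by blast
qed

lemma thin_sec2: "(x, y) \<in> thin A \<Longrightarrow> (x, y') \<in> thin A \<Longrightarrow> y' = y"
proof -
  assume a: "(x, y) \<in> thin A" "(x, y') \<in> thin A"
  have "\<forall>y'. (x, y') \<in> A \<longrightarrow> y' = y" using a(1) unfolding thin_iff by (elim conjE)
  moreover have "(x, y') \<in> A" using a(2) unfolding thin_iff by (elim conjE)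
  ultimately show ?thesis by blast
qed

lemma Gd_iff: "(x, y) \<in> Gd W \<longleftrightarrow> (\<forall>q\<in>\<rat>. \<forall>r\<in>\<rat>. q < x \<longrightarrow> r < y \<longrightarrow> (q, r) \<in> W) \<and>
                    (\<forall>q\<in>\<rat>. \<forall>r\<in>\<rat>. x < q \<longrightarrow> y < r \<longrightarrow> (q, r) \<notin> W)"
  unfolding Gd_def by simp

lemma NI_Gd: "NI (Gd W)"
  unfolding NI_def
proof (intro allI impI)
  fix x y x' y' assume a: "(x, y) \<in> Gd W" "(x', y') \<in> Gd W" "x < x'" "y < y'"
  obtain q where q: "q \<in> \<rat>" "x < q" "q < x'" using Rats_dense_in_real[OF a(3)] by blast
  obtain r where r: "r \<in> \<rat>" "y < r" "r < y'" using Rats_dense_in_real[OF a(4)] by blast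
  have "(q, r) \<in> W" using a(2) q r unfolding Gd_iff by blast
  moreover have "(q, r) \<notin> W" using a(1) q r unfolding Gd_iff by blast
  ultimately show False by simp
qed

lemma countable_Ey:
  assumes "NI A"
  shows "countable {y. \<exists>x x'. x < x' \<and> (x, y) \<in> A \<and> (x', y) \<in> A}"
proof -
  let ?E = "{y. \<exists>x x'. x < x' \<and> (x, y) \<in> A \<and> (x', y) \<in> A}"
  define Pq where "Pq y q = (q \<in> \<rat> \<and> (\<exists>x x'. x < q \<and> q < x' \<and> (x, y) \<in> A \<and> (x', y) \<in> A))" for y q
  define Q where "Q y = (SOME q. Pq y q)" for y
  have Q: "Q y \<in> \<rat> \<and> (\<exists>x x'. x < Q y \<and> Q y < x' \<and> (x, y) \<in> A \<and> (x', y) \<in> A)" if "y \<in> ?E" for y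
  proof -
    from that obtain x x' where xx: "x < x'" "(x, y) \<in> A" "(x', y) \<in> A" by blast
    obtain q where "q \<in> \<rat>" "x < q" "q < x'" using Rats_dense_in_real[OF xx(1)] by blast
    then have "\<exists>q. q \<in> \<rat> \<and> (\<exists>x x'. x < q \<and> q < x' \<and> (x, y) \<in> A \<and> (x', y) \<in> A)" using xx by blast
    then have "\<exists>q. Pq y q" unfolding Pq_def .
    then have "Pq y (Q y)" unfolding Q_def by (rule someI_ex)
    then show ?thesis unfolding Pq_def .
  qed
  have "inj_on Q ?E"
  proof (rule inj_onI, rule ccontr)
    fix y1 y2 assume y: "y1 \<in> ?E" "y2 \<in> ?E" "Q y1 = Q y2" "y1 \<noteq> y2"
    have *: False if H: "y1 \<in> ?E" "y2 \<in> ?E" "Q y1 = Q y2" "y1 < y2" for y1 y2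
    proof -
      obtain x1 where 1: "x1 < Q y1" "(x1, y1) \<in> A" using Q[OF H(1)] by blast
      obtain x2' where 2: "Q y2 < x2'" "(x2', y2) \<in> A" using Q[OF H(2)] by blast
      have "x1 < x2'" using 1(1) 2(1) H(3) by linarith
      then show False using assms 1(2) 2(2) H(4) unfolding NI_def by blast
    qed
    show False
    proof (cases "y1 < y2")
      case True then show ?thesis using *[OF y(1) y(2) y(3)] by blast
    next
      case False then have "y2 < y1" using y(4) by simp
      then show ?thesis using *[OF y(2) y(1) y(3)[symmetric]] by blast
    qed
  qed
  moreover have "countable (Q ` ?E)"
  proof (rule countable_subset[OF _ countable_rat])
    show "Q ` ?E \<subseteq> \<rat>"
    proof
      fix q assume "q \<in> Q ` ?E"
      then obtain z where "z \<in> ?E" "q = Q z" by blast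
      then show "q \<in> \<rat>" using Q[of z] by blast
    qed
  qed
  ultimately show ?thesis using countable_image_inj_on by blast
qed

lemma countable_Ex:
  assumes "NI A"
  shows "countable {x. \<exists>y y'. y < y' \<and> (x, y) \<in> A \<and> (x, y') \<in> A}"
proof -
  let ?E = "{x. \<exists>y y'. y < y' \<and> (x, y) \<in> A \<and> (x, y') \<in> A}"
  define Pq where "Pq x q = (q \<in> \<rat> \<and> (\<exists>y y'. y < q \<and> q < y' \<and> (x, y) \<in> A \<and> (x, y') \<in> A))" for x q
  define Q where "Q x = (SOME q. Pq x q)" for x
  have Q: "Q x \<in> \<rat> \<and> (\<exists>y y'. y < Q x \<and> Q x < y' \<and> (x, y) \<in> A \<and> (x, y') \<in> A)" if "x \<in> ?E" for x
  proof -
    from that obtain y y' where yy: "y < y'" "(x, y) \<in> A" "(x, y') \<in> A" by blast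
    obtain q where "q \<in> \<rat>" "y < q" "q < y'" using Rats_dense_in_real[OF yy(1)] by blast
    then have "\<exists>q. q \<in> \<rat> \<and> (\<exists>y y'. y < q \<and> q < y' \<and> (x, y) \<in> A \<and> (x, y') \<in> A)" using yy by blast
    then have "\<exists>q. Pq x q" unfolding Pq_def .
    then have "Pq x (Q x)" unfolding Q_def by (rule someI_ex)
    then show ?thesis unfolding Pq_def .
  qed
  have "inj_on Q ?E"
  proof (rule inj_onI, rule ccontr)
    fix x1 x2 assume x: "x1 \<in> ?E" "x2 \<in> ?E" "Q x1 = Q x2" "x1 \<noteq> x2"
    have *: False if H: "x1 \<in> ?E" "x2 \<in> ?E" "Q x1 = Q x2" "x1 < x2" for x1 x2
    proof -
      obtain y1 where 1: "y1 < Q x1" "(x1, y1) \<in> A" using Q[OF H(1)] by blast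
      obtain y2' where 2: "Q x2 < y2'" "(x2, y2') \<in> A" using Q[OF H(2)] by blast
      have "y1 < y2'" using 1(1) 2(1) H(3) by linarith
      then show False using assms 1(2) 2(2) H(4) unfolding NI_def by blast
    qed
    show False
    proof (cases "x1 < x2")
      case True then show ?thesis using *[OF x(1) x(2) x(3)] by blast
    next
      case False then have "x2 < x1" using x(4) by simp
      then show ?thesis using *[OF x(2) x(1) x(3)[symmetric]] by blast
    qed
  qed
  moreover have "countable (Q ` ?E)"
  proof (rule countable_subset[OF _ countable_rat])
    show "Q ` ?E \<subseteq> \<rat>"
    proof
      fix q assume "q \<in> Q ` ?E"
      then obtain z where "z \<in> ?E" "q = Q z" by blast
      then show "q \<in> \<rat>" using Q[of z] by blast
    qed
  qed
  ultimately show ?thesis using countable_image_inj_on by blast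
qed

definition Wd :: "(real \<times> real) set \<Rightarrow> (real \<times> real) set" where
  "Wd D = {(q, r). q \<in> \<rat> \<and> r \<in> \<rat> \<and> (\<exists>a b. (a, b) \<in> D \<and> q \<le> a \<and> r \<le> b)}"

lemma Wd_Rats: "Wd D \<subseteq> \<rat> \<times> \<rat>"
  unfolding Wd_def by auto

lemma D_sub_Gd: "NI D \<Longrightarrow> D \<subseteq> Gd (Wd D)"
proof
  fix p assume NI: "NI D" and p: "p \<in> D"
  obtain x y where xy: "p = (x, y)" by (cases p)
  have c1: "\<forall>q\<in>\<rat>. \<forall>r\<in>\<rat>. q < x \<longrightarrow> r < y \<longrightarrow> (q, r) \<in> Wd D"
    using p xy unfolding Wd_def by force
  have c2: "\<forall>q\<in>\<rat>. \<forall>r\<in>\<rat>. x < q \<longrightarrow> y < r \<longrightarrow> (q, r) \<notin> Wd D"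
  proof (intro ballI impI notI)
    fix q r assume "q \<in> \<rat>" "r \<in> \<rat>" "x < q" "y < r" "(q, r) \<in> Wd D"
    then obtain a b where ab: "(a, b) \<in> D" "q \<le> a" "r \<le> b" unfolding Wd_def by blast
    have "x < a" "y < b" using ab \<open>x < q\<close> \<open>y < r\<close> by linarith+
    then show False using NI p xy ab(1) unfolding NI_def by blast
  qed
  show "p \<in> Gd (Wd D)" unfolding Gd_iff xy using c1 c2 by blast
qed

lemma countable_not_thin:
  assumes "D \<subseteq> A" "NI A" "inj_on fst D" "inj_on snd D"
  shows "countable (D - thin A)"
proof -
  let ?Ey = "{y. \<exists>x x'. x < x' \<and> (x, y) \<in> A \<and> (x', y) \<in> A}"
  let ?Ex = "{x. \<exists>y y'. y < y' \<and> (x, y) \<in> A \<and> (x, y') \<in> A}"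
  have sub: "D - thin A \<subseteq> {p\<in>D. snd p \<in> ?Ey} \<union> {p\<in>D. fst p \<in> ?Ex}"
  proof
    fix p assume p: "p \<in> D - thin A"
    obtain x y where xy: "p = (x, y)" by (cases p)
    have pA: "(x, y) \<in> A" using p xy assms(1) by auto
    have "\<not> ((\<forall>x'. (x', y) \<in> A \<longrightarrow> x' = x) \<and> (\<forall>y'. (x, y') \<in> A \<longrightarrow> y' = y))"
    proof -
      have "(x, y) \<notin> thin A" using p xy by simp
      then show ?thesis using pA unfolding thin_iff by blast
    qed
    then consider x' where "(x', y) \<in> A" "x' \<noteq> x" | y' where "(x, y') \<in> A" "y' \<noteq> y" by blast
    then show "p \<in> {p\<in>D. snd p \<in> ?Ey} \<union> {p\<in>D. fst p \<in> ?Ex}"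
    proof cases
      case 1
      have "x < x' \<or> x' < x" using 1(2) by linarith
      then have "y \<in> ?Ey" using pA 1(1) by blast
      then show ?thesis using p xy by auto
    next
      case 2
      have "y < y' \<or> y' < y" using 2(2) by linarith
      then have "x \<in> ?Ex" using pA 2(1) by blast
      then show ?thesis using p xy by auto
    qed
  qed
  have "countable {p\<in>D. snd p \<in> ?Ey}"
  proof (rule countable_image_inj_on)
    show "countable (snd ` {p\<in>D. snd p \<in> ?Ey})"
      by (rule countable_subset[OF _ countable_Ey[OF assms(2)]]) auto
    show "inj_on snd {p\<in>D. snd p \<in> ?Ey}" using assms(4) by (rule inj_on_subset) auto
  qed
  moreover have "countable {p\<in>D. fst p \<in> ?Ex}"
  proof (rule countable_image_inj_on)
    show "countable (fst ` {p\<in>D. fst p \<in> ?Ex})"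
      by (rule countable_subset[OF _ countable_Ex[OF assms(2)]]) auto
    show "inj_on fst {p\<in>D. fst p \<in> ?Ex}" using assms(3) by (rule inj_on_subset) auto
  qed
  ultimately have "countable ({p\<in>D. snd p \<in> ?Ey} \<union> {p\<in>D. fst p \<in> ?Ex})" by (rule countable_Un)
  then show ?thesis using sub by (rule countable_subset[rotated])
qed

lemma cover_NI:
  assumes "NI D" "inj_on fst D" "inj_on snd D"
  shows "\<exists>W. W \<subseteq> \<rat> \<times> \<rat> \<and> countable (D - thin (Gd W))"
  using countable_not_thin[OF D_sub_Gd[OF assms(1)] NI_Gd assms(2,3)] Wd_Rats by blast

lemma inj_mir: "inj_on (\<lambda>(x, y). (x, - y :: real)) A"
  by (rule inj_onI) auto

lemma cover_ND:
  assumes "NI (mir D)" "inj_on fst D" "inj_on snd D"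
  shows "\<exists>W. W \<subseteq> \<rat> \<times> \<rat> \<and> countable (D - mir (thin (Gd W)))"
proof -
  have i1: "inj_on fst (mir D)"
  proof (rule inj_onI)
    fix p q assume pq: "p \<in> mir D" "q \<in> mir D" "fst p = fst q"
    obtain a b a' b' where e: "p = (a, b)" "q = (a', b')" by (cases p, cases q)
    have "(a, - b) \<in> D" "(a', - b') \<in> D" using pq e mir_iff by auto
    moreover have "fst (a, - b) = fst (a', - b')" using pq e by simp
    ultimately have "(a, - b) = (a', - b')" using inj_onD[OF assms(2)] by blast
    then show "p = q" using e by simp
  qed
  have i2: "inj_on snd (mir D)"
  proof (rule inj_onI)
    fix p q assume pq: "p \<in> mir D" "q \<in> mir D" "snd p = snd q"
    obtain a b a' b' where e: "p = (a, b)" "q = (a', b')" by (cases p, cases q)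
    have "(a, - b) \<in> D" "(a', - b') \<in> D" using pq e mir_iff by auto
    moreover have "snd (a, - b) = snd (a', - b')" using pq e by simp
    ultimately have "(a, - b) = (a', - b')" using inj_onD[OF assms(3)] by blast
    then show "p = q" using e by simp
  qed
  obtain W where W: "W \<subseteq> \<rat> \<times> \<rat>" "countable (mir D - thin (Gd W))" using cover_NI[OF assms(1) i1 i2] by blast
  have "D - mir (thin (Gd W)) = mir (mir D - thin (Gd W))"
  proof (rule set_eqI)
    fix p :: "real \<times> real"
    obtain x y where "p = (x, y)" by (cases p)
    then show "p \<in> D - mir (thin (Gd W)) \<longleftrightarrow> p \<in> mir (mir D - thin (Gd W))" by (simp add: mir_iff)
  qed
  then have "countable (D - mir (thin (Gd W)))" using W(2) unfolding mir_def by simp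
  then show ?thesis using W(1) by blast
qed


lemma real_K: "(UNIV :: real set) \<approx> (UNIV :: (nat \<Rightarrow> bool) set)"
proof (rule lepoll_antisym)
  show "(UNIV :: (nat \<Rightarrow> bool) set) \<lesssim> (UNIV :: real set)"
    unfolding lepoll_def using Emb_inj by blast
  define f where "f x = (\<lambda>n. from_nat_into (\<rat> :: real set) n < x)" for x :: real
  have rq: "range (from_nat_into (\<rat> :: real set)) = \<rat>"
    by (rule range_from_nat_into) (auto simp: countable_rat)
  have "inj f"
  proof (rule injI, rule ccontr)
    fix x y :: real assume e: "f x = f y" and ne: "x \<noteq> y"
    have *: False if H: "u < v" "f u = f v" for u v :: real
    proof -
      obtain q where q: "q \<in> \<rat>" "u < q" "q < v" using Rats_dense_in_real[OF H(1)] by blast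
      then obtain n where n: "q = from_nat_into (\<rat> :: real set) n" using rq by blast
      have "f u n = f v n" using H(2) by simp
      then show False using q n unfolding f_def by simp
    qed
    show False
    proof (cases "x < y")
      case True show ?thesis using *[OF True e] by blast
    next
      case False then have "y < x" using ne by simp
      then show ?thesis using *[OF _ e[symmetric]] by blast
    qed
  qed
  then show "(UNIV :: real set) \<lesssim> (UNIV :: (nat \<Rightarrow> bool) set)"
    unfolding lepoll_def by blast
qed

lemma subsingleton_countable: "(\<And>x x'. x \<in> S \<Longrightarrow> x' \<in> S \<Longrightarrow> x = x') \<Longrightarrow> countable S"
proof -
  assume a: "\<And>x x'. x \<in> S \<Longrightarrow> x' \<in> S \<Longrightarrow> x = x'"
  have "S \<subseteq> {SOME x. x \<in> S}"
  proof
    fix x assume "x \<in> S"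
    then have "(SOME x. x \<in> S) \<in> S" by (rule someI)
    then show "x \<in> {SOME x. x \<in> S}" using a \<open>x \<in> S\<close> by blast
  qed
  then show ?thesis by (rule countable_subset) simp
qed

definition qq :: "nat \<Rightarrow> real \<times> real" where
  "qq = from_nat_into (\<rat> \<times> \<rat>)"

definition Wc :: "(nat \<Rightarrow> bool) \<Rightarrow> (real \<times> real) set" where
  "Wc c = qq ` {n. c n}"

lemma Wc_surj: "W \<subseteq> \<rat> \<times> \<rat> \<Longrightarrow> Wc (\<lambda>n. qq n \<in> W) = W"
proof -
  assume W: "W \<subseteq> \<rat> \<times> \<rat>"
  have r: "range qq = \<rat> \<times> \<rat>" unfolding qq_def
    by (rule range_from_nat_into) (auto simp: countable_rat)
  show ?thesis
  proof
    show "Wc (\<lambda>n. qq n \<in> W) \<subseteq> W" unfolding Wc_def by auto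
    show "W \<subseteq> Wc (\<lambda>n. qq n \<in> W)"
    proof
      fix p assume "p \<in> W"
      then have "p \<in> range qq" using W r by blast
      then obtain n where "p = qq n" by blast
      then show "p \<in> Wc (\<lambda>n. qq n \<in> W)" unfolding Wc_def using \<open>p \<in> W\<close> by blast
    qed
  qed
qed

definition Th :: "(nat \<Rightarrow> bool) \<Rightarrow> (real \<times> real) set" where
  "Th c = thin (Gd (Wc c)) \<union> mir (thin (Gd (Wc c)))"

lemma countable_sec1: "countable {x. (x, y) \<in> Th c}"
proof -
  have "{x. (x, y) \<in> Th c} = {x. (x, y) \<in> thin (Gd (Wc c))} \<union> {x. (x, - y) \<in> thin (Gd (Wc c))}"
    unfolding Th_def by (auto simp: mir_iff)
  moreover have "countable {x. (x, y) \<in> thin (Gd (Wc c))}"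
    by (rule subsingleton_countable) (auto dest: thin_sec1)
  moreover have "countable {x. (x, - y) \<in> thin (Gd (Wc c))}"
    by (rule subsingleton_countable) (auto dest: thin_sec1)
  ultimately show ?thesis by simp
qed

lemma countable_sec2: "countable {x. (y, x) \<in> Th c}"
proof -
  have "{x. (y, x) \<in> Th c} = {x. (y, x) \<in> thin (Gd (Wc c))} \<union> {x. (y, - x) \<in> thin (Gd (Wc c))}"
    unfolding Th_def by (auto simp: mir_iff)
  moreover have "countable {x. (y, x) \<in> thin (Gd (Wc c))}"
    by (rule subsingleton_countable) (auto dest: thin_sec2)
  moreover have "countable {x. (y, - x) \<in> thin (Gd (Wc c))}"
  proof (rule subsingleton_countable)
    fix x x' assume "x \<in> {x. (y, - x) \<in> thin (Gd (Wc c))}" "x' \<in> {x. (y, - x) \<in> thin (Gd (Wc c))}"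
    then have "- x' = - x" using thin_sec2 by blast
    then show "x = x'" by simp
  qed
  ultimately show ?thesis by simp
qed

abbreviation UU :: "(nat \<Rightarrow> bool) \<Rightarrow> (nat \<Rightarrow> bool) set" where
  "UU a \<equiv> underS |UNIV :: (nat \<Rightarrow> bool) set| a"

definition Xs :: "((nat \<Rightarrow> bool) \<Rightarrow> real) \<Rightarrow> (nat \<Rightarrow> bool) \<Rightarrow> real set" where
  "Xs g a = {x. \<exists>b\<in>UU a. \<exists>c\<in>UU a. \<exists>y\<in>tdeg (g b). (x, y) \<in> Th c \<or> (y, x) \<in> Th c}"

definition Fb :: "((nat \<Rightarrow> bool) \<Rightarrow> real) \<Rightarrow> (nat \<Rightarrow> bool) \<Rightarrow> real set" where
  "Fb g a = (\<Union>x\<in>Xs g a. tdeg x) \<union> g ` UU a"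

lemma small_Xs: "small (Xs g a)"
proof -
  have "Xs g a \<subseteq> (\<Union>p\<in>UU a \<times> UU a. \<Union>y\<in>tdeg (g (fst p)). {x. (x, y) \<in> Th (snd p)} \<union> {x. (y, x) \<in> Th (snd p)})"
    unfolding Xs_def by force
  moreover have "small (\<Union>p\<in>UU a \<times> UU a. \<Union>y\<in>tdeg (g (fst p)). {x. (x, y) \<in> Th (snd p)} \<union> {x. (y, x) \<in> Th (snd p)})"
  proof (rule small_UN)
    show "small (UU a \<times> UU a)" by (rule small_Times[OF small_underS])
    show "\<forall>p\<in>UU a \<times> UU a. countable (\<Union>y\<in>tdeg (g (fst p)). {x. (x, y) \<in> Th (snd p)} \<union> {x. (y, x) \<in> Th (snd p)})"
      using countable_tdeg countable_sec1 countable_sec2 by (auto intro!: countable_UN)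
  qed
  ultimately show ?thesis by (rule small_subset)
qed

lemma small_Fb: "small (Fb g a)"
  unfolding Fb_def
  by (rule small_Un[OF small_UN[OF small_Xs] small_image[OF small_underS]]) (simp add: countable_tdeg)

lemma Fb_local: "(\<forall>b \<in> UU a. h b = h' b) \<Longrightarrow> Fb h a = Fb h' a"
  unfolding Fb_def Xs_def by (auto simp: image_iff)


lemma equiv_sym: "x \<equiv>\<^sub>T y \<Longrightarrow> y \<equiv>\<^sub>T x"
  unfolding turing_equiv_def by simp

lemma main_construction:
  "\<exists>g :: (nat \<Rightarrow> bool) \<Rightarrow> real.
     (\<forall>a b. a \<noteq> b \<longrightarrow> \<not> g a \<le>\<^sub>T g b) \<and> (\<forall>a. g a \<notin> Fb g a)"
proof -
  obtain G :: "(nat \<Rightarrow> bool) \<Rightarrow> real" where G: "inj G" "\<forall>b b'. b \<noteq> b' \<longrightarrow> \<not> G b \<le>\<^sub>T G b'"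
    using perfect_antichain by blast
  have nP: "\<not> small (range G)"
  proof
    assume "small (range G)"
    moreover have "(UNIV :: (nat \<Rightarrow> bool) set) \<approx> range G"
      using inj_on_image_eqpoll_self[OF G(1)] eqpoll_sym by blast
    ultimately have "small (UNIV :: (nat \<Rightarrow> bool) set)" by (rule eqpoll_small[rotated])
    then show False using not_small_K by simp
  qed
  have avoid: "\<exists>x \<in> range G. x \<notin> Fb h a" for h a
  proof (rule ccontr)
    assume "\<not> (\<exists>x \<in> range G. x \<notin> Fb h a)"
    then have "range G \<subseteq> Fb h a" by blast
    then have "small (range G)" using small_Fb by (rule small_subset)
    then show False using nP by simp
  qed
  obtain g where g: "\<forall>a. g a \<in> range G \<and> g a \<notin> Fb g a"
    using transfinite_choice[of Fb "range G", OF Fb_local avoid] by blast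
  have ne: "g a \<noteq> g b" if "a \<noteq> b" for a b
  proof -
    have "g a \<noteq> g b" if "b \<in> UU a" for a b
    proof -
      have "g b \<in> Fb g a" unfolding Fb_def using that by blast
      then show ?thesis using g by metis
    qed
    then show ?thesis using underS_K_total[OF \<open>a \<noteq> b\<close>] by metis
  qed
  have "\<not> g a \<le>\<^sub>T g b" if "a \<noteq> b" for a b
  proof -
    obtain u v where "g a = G u" "g b = G v" using g by blast
    moreover have "u \<noteq> v" using ne[OF that] calculation by auto
    ultimately show ?thesis using G(2) by simp
  qed
  then show ?thesis using g by blast
qed

theorem mainTheorem18:
  assumes "cov_eq_continuum meager \<or> cov_eq_continuum lebesgue_null"
  shows "\<exists>S. (\<forall>D\<in>S. is_turing_degree D) \<and> S \<approx> (UNIV :: real set) \<and> degree_antichain S \<and>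
    (\<forall>C. C \<approx> (UNIV :: real set) \<and> pairwise_disjoint_pairs C \<and>
         C \<subseteq> reals_of_degrees S \<times> reals_of_degrees S \<and>
         (\<forall>(x,y)\<in>C. tdeg x \<noteq> tdeg y) \<longrightarrow>
       (\<exists>x1 y1 x2 y2. (x1,y1) \<in> C \<and> (x2,y2) \<in> C \<and> x1 < x2 \<and> y1 < y2) \<and>
       (\<exists>w1 z1 w2 z2. (w1,z1) \<in> C \<and> (w2,z2) \<in> C \<and> w1 < w2 \<and> z1 > z2))"
proof -
  obtain g :: "(nat \<Rightarrow> bool) \<Rightarrow> real" where
    g1: "\<And>a b. a \<noteq> b \<Longrightarrow> \<not> g a \<le>\<^sub>T g b" and g2: "\<And>a. g a \<notin> Fb g a"
    using main_construction by blast
  define S where "S = range (\<lambda>a. tdeg (g a))"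
  have S1: "\<forall>D\<in>S. is_turing_degree D" unfolding S_def is_turing_degree_def by blast
  have injS: "inj (\<lambda>a. tdeg (g a))"
  proof (rule injI, rule ccontr)
    fix a b assume "tdeg (g a) = tdeg (g b)" "a \<noteq> b"
    then have "g a \<equiv>\<^sub>T g b" using turing_equiv_tdeg by blast
    then show False using g1[OF \<open>a \<noteq> b\<close>] unfolding turing_equiv_def by simp
  qed
  have S2: "S \<approx> (UNIV :: real set)"
  proof -
    have "S \<approx> (UNIV :: (nat \<Rightarrow> bool) set)" unfolding S_def by (rule inj_on_image_eqpoll_self[OF injS])
    then show ?thesis using eqpoll_trans eqpoll_sym[OF real_K] by blast
  qed
  have S3: "degree_antichain S"
    unfolding degree_antichain_def
  proof (intro ballI impI notI)
    fix D E assume D: "D \<in> S" and E: "E \<in> S" and DE: "D \<noteq> E" and le: "degree_le D E"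
    obtain a where a: "D = tdeg (g a)" using D unfolding S_def by blast
    obtain b where b: "E = tdeg (g b)" using E unfolding S_def by blast
    have ab: "a \<noteq> b" using DE a b by blast
    obtain x y where xy: "x \<in> D" "y \<in> E" "x \<le>\<^sub>T y" using le unfolding degree_le_def by blast
    have "g a \<le>\<^sub>T x" using xy(1) a unfolding tdeg_def turing_equiv_def by simp
    moreover have "y \<le>\<^sub>T g b" using xy(2) b unfolding tdeg_def turing_equiv_def by simp
    ultimately have "g a \<le>\<^sub>T g b" using xy(3) turing_le_trans by blast
    then show False using g1[OF ab] by simp
  qed
  have S4: "(\<exists>x1 y1 x2 y2. (x1,y1) \<in> C \<and> (x2,y2) \<in> C \<and> x1 < x2 \<and> y1 < y2) \<and>
       (\<exists>w1 z1 w2 z2. (w1,z1) \<in> C \<and> (w2,z2) \<in> C \<and> w1 < w2 \<and> z1 > z2)"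
    if C: "C \<approx> (UNIV :: real set)" "pairwise_disjoint_pairs C"
         "C \<subseteq> reals_of_degrees S \<times> reals_of_degrees S" "\<forall>(x,y)\<in>C. tdeg x \<noteq> tdeg y" for C
  proof -
    have nsC: "\<not> small C"
    proof
      assume "small C"
      moreover have "(UNIV :: (nat \<Rightarrow> bool) set) \<approx> C"
        using eqpoll_trans[OF eqpoll_sym[OF real_K] eqpoll_sym[OF C(1)]] .
      ultimately have "small (UNIV :: (nat \<Rightarrow> bool) set)" by (rule eqpoll_small[rotated])
      then show False using not_small_K by simp
    qed
    have disj: "\<And>p q. p \<in> C \<Longrightarrow> q \<in> C \<Longrightarrow> p \<noteq> q \<Longrightarrow> {fst p, snd p} \<inter> {fst q, snd q} = {}"
      using C(2) unfolding pairwise_disjoint_pairs_def by blast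
    have injf: "inj_on fst C"
    proof (rule inj_onI, rule ccontr)
      fix p q assume "p \<in> C" "q \<in> C" "fst p = fst q" "p \<noteq> q"
      then show False using disj[of p q] by auto
    qed
    have injs: "inj_on snd C"
    proof (rule inj_onI, rule ccontr)
      fix p q assume "p \<in> C" "q \<in> C" "snd p = snd q" "p \<noteq> q"
      then show False using disj[of p q] by auto
    qed
    have deg: "\<exists>a. z \<equiv>\<^sub>T g a" if "z \<in> reals_of_degrees S" for z
    proof -
      have "tdeg z \<in> S" using that unfolding reals_of_degrees_def by simp
      then obtain a where "tdeg z = tdeg (g a)" unfolding S_def by blast
      then show ?thesis using turing_equiv_tdeg by blast
    qed
    have stepcontra: False
      if H: "x \<equiv>\<^sub>T g \<alpha>" "y \<equiv>\<^sub>T g \<beta>" "(x, y) \<in> Th c \<or> (y, x) \<in> Th c" "c \<in> UU \<alpha>" "\<beta> \<in> UU \<alpha>"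
      for x y \<alpha> \<beta> c
    proof -
      have "y \<in> tdeg (g \<beta>)" using H(2) unfolding tdeg_def by simp
      then have "x \<in> Xs g \<alpha>" unfolding Xs_def using H(3,4,5) by blast
      moreover have "g \<alpha> \<in> tdeg x" using equiv_sym[OF H(1)] unfolding tdeg_def by simp
      ultimately have "g \<alpha> \<in> Fb g \<alpha>" unfolding Fb_def by blast
      then show False using g2 by simp
    qed
    have bounded: "small (C \<inter> Th c)" for c
    proof -
      have fsub: "fst ` (C \<inter> Th c) \<subseteq> (\<Union>a\<in>insert c (UU c). tdeg (g a))"
      proof
        fix x assume "x \<in> fst ` (C \<inter> Th c)"
        then obtain y where xy: "(x, y) \<in> C" "(x, y) \<in> Th c" by auto
        have "x \<in> reals_of_degrees S" "y \<in> reals_of_degrees S" using xy(1) C(3) by auto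
        then obtain \<alpha> \<beta> where \<alpha>: "x \<equiv>\<^sub>T g \<alpha>" and \<beta>: "y \<equiv>\<^sub>T g \<beta>" using deg by blast
        have "tdeg x \<noteq> tdeg y" using C(4) xy(1) by auto
        then have ab: "\<alpha> \<noteq> \<beta>" using \<alpha> \<beta> turing_equiv_tdeg by (metis equiv_sym turing_le_trans turing_equiv_def)
        have "\<alpha> \<in> insert c (UU c)"
        proof (rule ccontr)
          assume "\<alpha> \<notin> insert c (UU c)"
          then have c\<alpha>: "c \<in> UU \<alpha>" using underS_K_total[of c \<alpha>] by auto
          show False
          proof (cases "\<beta> \<in> UU \<alpha>")
            case True
            then show False using stepcontra[OF \<alpha> \<beta> _ c\<alpha> True] xy(2) by blast
          next
            case False
            then have "\<alpha> \<in> UU \<beta>" using underS_K_total[OF ab] by blast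
            then have c\<beta>: "c \<in> UU \<beta>" using underS_K_trans[OF c\<alpha>] by blast
            show False using stepcontra[OF \<beta> \<alpha> _ c\<beta> \<open>\<alpha> \<in> UU \<beta>\<close>] xy(2) by blast
          qed
        qed
        moreover have "x \<in> tdeg (g \<alpha>)" using \<alpha> unfolding tdeg_def by simp
        ultimately show "x \<in> (\<Union>a\<in>insert c (UU c). tdeg (g a))" by blast
      qed
      have "small (insert c (UU c))"
        using small_Un[OF countable_small[of "{c}"] small_underS] by simp
      then have "small (\<Union>a\<in>insert c (UU c). tdeg (g a))" by (rule small_UN) (simp add: countable_tdeg)
      then have "small (fst ` (C \<inter> Th c))" using fsub by (rule small_subset[rotated])
      moreover have "C \<inter> Th c \<approx> fst ` (C \<inter> Th c)"
        using eqpoll_sym[OF inj_on_image_eqpoll_self[OF inj_on_subset[OF injf]]] by blast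
      ultimately show ?thesis by (rule eqpoll_small[rotated])
    qed
    have inc: "\<exists>x1 y1 x2 y2. (x1,y1) \<in> C \<and> (x2,y2) \<in> C \<and> x1 < x2 \<and> y1 < y2"
    proof (rule ccontr)
      assume n: "\<not> (\<exists>x1 y1 x2 y2. (x1,y1) \<in> C \<and> (x2,y2) \<in> C \<and> x1 < x2 \<and> y1 < y2)"
      then have "NI C" unfolding NI_def by blast
      from cover_NI[OF this injf injs] obtain W where W: "W \<subseteq> \<rat> \<times> \<rat>" "countable (C - thin (Gd W))" by blast
      define c where "c = (\<lambda>n. qq n \<in> W)"
      have "Wc c = W" unfolding c_def by (rule Wc_surj[OF W(1)])
      then have "thin (Gd W) \<subseteq> Th c" unfolding Th_def by blast
      then have "C \<subseteq> (C \<inter> Th c) \<union> (C - thin (Gd W))" by blast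
      moreover have "small ((C \<inter> Th c) \<union> (C - thin (Gd W)))"
        by (rule small_Un[OF bounded countable_small[OF W(2)]])
      ultimately have "small C" by (rule small_subset)
      then show False using nsC by simp
    qed
    have dec: "\<exists>w1 z1 w2 z2. (w1,z1) \<in> C \<and> (w2,z2) \<in> C \<and> w1 < w2 \<and> z1 > z2"
    proof (rule ccontr)
      assume n: "\<not> (\<exists>w1 z1 w2 z2. (w1,z1) \<in> C \<and> (w2,z2) \<in> C \<and> w1 < w2 \<and> z1 > z2)"
      have "NI (mir C)" unfolding NI_def
      proof (intro allI impI)
        fix x y x' y' assume "(x, y) \<in> mir C" "(x', y') \<in> mir C" "x < x'" "y < y'"
        then have "(x, - y) \<in> C" "(x', - y') \<in> C" "x < x'" "- y > - y'" by (auto simp: mir_iff)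
        then show False using n by blast
      qed
      from cover_ND[OF this injf injs] obtain W where W: "W \<subseteq> \<rat> \<times> \<rat>" "countable (C - mir (thin (Gd W)))" by blast
      define c where "c = (\<lambda>n. qq n \<in> W)"
      have "Wc c = W" unfolding c_def by (rule Wc_surj[OF W(1)])
      then have "mir (thin (Gd W)) \<subseteq> Th c" unfolding Th_def by blast
      then have "C \<subseteq> (C \<inter> Th c) \<union> (C - mir (thin (Gd W)))" by blast
      moreover have "small ((C \<inter> Th c) \<union> (C - mir (thin (Gd W))))"
        by (rule small_Un[OF bounded countable_small[OF W(2)]])
      ultimately have "small C" by (rule small_subset)
      then show False using nsC by simp
    qed
    show ?thesis using inc dec by blast
  qed
  show ?thesis
    by (rule exI[of _ S]) (use S1 S2 S3 S4 in blast)
qed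


end
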